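(* Let $f:\mathbb{R}^d\to\mathbb{R}$ be $\beta$-smooth with minimum value $f^\star$, and run AdaSGD (as defined in the context) for $T$ steps with parameters $\eta,\gamma>0$ using a stochastic gradient oracle with bounded affine noise with parameters $\sigma_0,\sigma_1\ge0$. Then for any $\delta\in(0,1)$, with probability at least $1-2\delta$, $$\sum_{t=1}^T\nabla f(w_t)\cdot(\nabla f(w_t)-g_t)\le\frac14\sum_{t=1}^T\|\nabla f(w_t)\|^2+3(\sigma_0^2+2\beta\sigma_1^2F)\log\tfrac1\delta,$$ where $\Delta_1=f(w_1)-f^\star$, $F=2\Delta_1+(3\log\frac T\delta+4C_1)\eta\sigma_0+(9\log^2\frac T\delta+16C_1^2)\eta^2\beta\sigma_1^2+\eta^2\beta C_1$ and $C_1=\log\big(1+\frac{2\sigma_0^2T+8(1+\sigma_1^2)(\eta^2\beta^2T^3+\beta\Delta_1T)}{\gamma^2}\big)$.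
   Context: $\|\cdot\|$ is the Euclidean norm and $\log$ the base-2 logarithm. $\beta$-smooth: $\|\nabla f(x)-\nabla f(y)\|\le\beta\|x-y\|$. Oracle: queried at $w$, returns random $g(w)$ with $\mathbb{E}[g(w)\mid w]=\nabla f(w)$ and, with probability one, $\|g(w)-\nabla f(w)\|^2\le\sigma_0^2+\sigma_1^2\|\nabla f(w)\|^2$. AdaSGD: arbitrary $w_1$; for $t=1,\dots,T$, $g_t=g(w_t)$ a fresh oracle answer ($\mathbb{E}[g_t\mid g_1,\dots,g_{t-1}]=\nabla f(w_t)$), $\eta_t=\eta/\sqrt{\gamma^2+\sum_{s=1}^t\|g_s\|^2}$, $w_{t+1}=w_t-\eta_tg_t$. *)

theory Defs
  imports "HOL-Probability.Probability"
begin

definition nat_filt :: "'a measure \<Rightarrow> (nat \<Rightarrow> 'a \<Rightarrow> 'd::euclidean_space) \<Rightarrow> nat \<Rightarrow> 'a measure" where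
  "nat_filt M g t = sigma (space M) (\<Union>s\<in>{1..<t}. {g s -` B \<inter> space M | B. B \<in> sets borel})"

text \<open>AdaSGD iterates: ada_w w1 eta gamma g t x is w_t (for t >= 1) on sample point x:
  w_1 = w1, w_(t+1) = w_t - eta_t g_t, eta_t = eta / sqrt(gamma^2 + sum_(s=1..t) |g_s|^2).\<close>
primrec ada_w :: "'d::euclidean_space \<Rightarrow> real \<Rightarrow> real \<Rightarrow> (nat \<Rightarrow> 'a \<Rightarrow> 'd) \<Rightarrow> nat \<Rightarrow> 'a \<Rightarrow> 'd" where
  "ada_w w1 eta gamma g 0 x = w1"
| "ada_w w1 eta gamma g (Suc t) x =
     (if t = 0 then w1
      else ada_w w1 eta gamma g t x
           - (eta / sqrt (gamma\<^sup>2 + (\<Sum>s=1..t. (norm (g s x))\<^sup>2))) *\<^sub>R g t x)"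

end

theory Submission
  imports Defs
begin
lemma descent_lemma:
  fixes f :: "'d::euclidean_space \<Rightarrow> real" and G :: "'d \<Rightarrow> 'd"
  assumes grad: "\<And>x. (f has_derivative (\<lambda>h. G x \<bullet> h)) (at x)"
    and smooth: "\<And>x y. norm (G x - G y) \<le> beta * norm (x - y)"
  shows "f y \<le> f x + G x \<bullet> (y - x) + beta / 2 * (norm (y - x))\<^sup>2"
proof -
  define d where "d = y - x"
  define \<phi> where "\<phi> = (\<lambda>s. f (x + s *\<^sub>R d) - s * (G x \<bullet> d) - beta / 2 * s\<^sup>2 * (norm d)\<^sup>2)"
  have D: "DERIV \<phi> s :> (G (x + s *\<^sub>R d) \<bullet> d - G x \<bullet> d - beta * s * (norm d)\<^sup>2)" for s
  proof -
    have h1: "((\<lambda>s. x + s *\<^sub>R d) has_derivative (\<lambda>h. h *\<^sub>R d)) (at s)"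
      by (auto intro!: derivative_eq_intros)
    have h2: "((\<lambda>s. f (x + s *\<^sub>R d)) has_derivative (\<lambda>h. G (x + s *\<^sub>R d) \<bullet> (h *\<^sub>R d))) (at s)"
      using has_derivative_compose[OF h1 grad] by simp
    have h3: "((\<lambda>s. f (x + s *\<^sub>R d)) has_real_derivative (G (x + s *\<^sub>R d) \<bullet> d)) (at s)"
      by (rule has_derivative_imp_has_field_derivative[OF h2]) (simp add: mult.commute)
    show ?thesis unfolding \<phi>_def
      by (rule h3 derivative_eq_intros refl | simp add: power2_eq_square algebra_simps)+
  qed
  have "\<phi> 1 \<le> \<phi> 0"
  proof (rule DERIV_nonpos_imp_nonincreasing[of 0 1])
    fix s :: real assume s: "0 \<le> s" "s \<le> 1"
    have "G (x + s *\<^sub>R d) \<bullet> d - G x \<bullet> d = (G (x + s *\<^sub>R d) - G x) \<bullet> d" by (simp add: inner_diff_left)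
    also have "\<dots> \<le> norm (G (x + s *\<^sub>R d) - G x) * norm d" by (rule norm_cauchy_schwarz)
    also have "\<dots> \<le> beta * norm (s *\<^sub>R d) * norm d"
      using smooth[of "x + s *\<^sub>R d" x] by (intro mult_right_mono) auto
    also have "\<dots> = beta * s * (norm d)\<^sup>2" using s by (simp add: power2_eq_square)
    finally show "\<exists>y. DERIV \<phi> s :> y \<and> y \<le> 0" using D by (intro exI conjI) auto
  qed simp
  then show ?thesis unfolding \<phi>_def d_def by (simp add: algebra_simps)
qed

lemma beta_nonneg:
  fixes G :: "'d::euclidean_space \<Rightarrow> 'd"
  assumes smooth: "\<And>x y. norm (G x - G y) \<le> beta * norm (x - y)"
  shows "beta \<ge> 0"
proof -
  obtain b :: 'd where b: "b \<in> Basis" using nonempty_Basis by blast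
  have "0 \<le> norm (G b - G 0)" by simp
  also have "\<dots> \<le> beta * norm (b - 0)" by (rule smooth)
  finally show ?thesis using b by (simp add: zero_le_mult_iff)
qed

lemma grad_sq_bound:
  fixes f :: "'d::euclidean_space \<Rightarrow> real" and G :: "'d \<Rightarrow> 'd"
  assumes grad: "\<And>x. (f has_derivative (\<lambda>h. G x \<bullet> h)) (at x)"
    and smooth: "\<And>x y. norm (G x - G y) \<le> beta * norm (x - y)"
    and fmin: "\<And>x. fstar \<le> f x"
  shows "(norm (G x))\<^sup>2 \<le> 2 * beta * (f x - fstar)"
proof (cases "beta = 0")
  case True
  have "(norm (G x))\<^sup>2 \<le> 0"
  proof (rule ccontr)
    assume "\<not> ?thesis"
    hence pos: "(norm (G x))\<^sup>2 > 0" by simp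
    define s where "s = (f x - fstar + 1) / (norm (G x))\<^sup>2"
    have "fstar \<le> f (x - s *\<^sub>R G x)" by (rule fmin)
    also have "\<dots> \<le> f x + G x \<bullet> ((x - s *\<^sub>R G x) - x)"
      using descent_lemma[OF grad smooth, of "x - s *\<^sub>R G x" x] True by simp
    also have "\<dots> = f x - s * (norm (G x))\<^sup>2" by (simp add: power2_norm_eq_inner)
    also have "\<dots> = fstar - 1" using pos unfolding s_def by simp
    finally show False by simp
  qed
  thus ?thesis using True by simp
next
  case False
  hence bpos: "beta > 0" using beta_nonneg[OF smooth] by simp
  have "fstar \<le> f (x - (1/beta) *\<^sub>R G x)" by (rule fmin)
  also have "\<dots> \<le> f x + G x \<bullet> ((x - (1/beta) *\<^sub>R G x) - x) + beta / 2 * (norm ((x - (1/beta) *\<^sub>R G x) - x))\<^sup>2"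
    by (rule descent_lemma[OF grad smooth])
  also have "\<dots> = f x - (norm (G x))\<^sup>2 / (2 * beta)"
    using bpos by (simp add: power2_norm_eq_inner[symmetric] power2_eq_square field_simps)
  finally show ?thesis using bpos by (simp add: field_simps)
qed

lemma cosh_le_exp_sq: "cosh (x::real) \<le> exp (x\<^sup>2 / 2)"
proof -
  have main: "cosh y \<le> exp (y\<^sup>2 / 2)" if y: "y \<ge> 0" for y :: real
  proof -
    have "-(2*y) * (1/2) + ln (1 + (1/2) * (exp (2*y) - 1)) \<le> (2*y)\<^sup>2 / 8"
      using Hoeffdings_lemma_aux[of "2*y" "1/2"] y by simp
    hence "ln ((1 + exp (2*y)) / 2) \<le> y + y\<^sup>2 / 2"
      by (simp add: power2_eq_square field_simps)
    hence "(1 + exp (2*y)) / 2 \<le> exp (y + y\<^sup>2 / 2)"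
      by (metis add_pos_pos divide_pos_pos exp_gt_zero exp_le_cancel_iff exp_ln zero_less_numeral zero_less_one)
    hence "exp (-y) * ((1 + exp (2*y)) / 2) \<le> exp (-y) * exp (y + y\<^sup>2 / 2)"
      by (intro mult_left_mono) auto
    moreover have "exp (-y) * ((1 + exp (2*y)) / 2) = cosh y"
      by (simp add: cosh_def exp_minus field_simps flip: exp_add)
    moreover have "exp (-y) * exp (y + y\<^sup>2 / 2) = exp (y\<^sup>2 / 2)" by (simp flip: exp_add)
    ultimately show ?thesis by simp
  qed
  show ?thesis
  proof (cases "x \<ge> 0")
    case True thus ?thesis by (rule main)
  next
    case False
    thus ?thesis using main[of "-x"] by simp
  qed
qed

lemma exp_convex_bound:
  fixes l y z :: real
  assumes "\<bar>z\<bar> \<le> y"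
  shows "exp (l * z) \<le> cosh (l * y) + (if y = 0 then 0 else sinh (l * y) / y) * z"
proof (cases "y = 0")
  case True thus ?thesis using assms by simp
next
  case False
  hence yp: "y > 0" using assms by linarith
  define a where "a = (y + z) / (2 * y)"
  have a01: "0 \<le> a" "a \<le> 1" using assms yp by (auto simp: a_def field_simps abs_le_iff)
  have zeq: "z = a * y + (1 - a) * (-y)" using yp by (simp add: a_def field_simps)
  have "convex_on UNIV exp" by (rule convex_on_exp[of 1, simplified])
  hence "exp ((1 - a) *\<^sub>R (-(l*y)) + a *\<^sub>R (l*y)) \<le> (1 - a) * exp (-(l*y)) + a * exp (l*y)"
    using a01 by (intro convex_onD) auto
  hence "exp (a * (l*y) + (1 - a) * (-(l*y))) \<le> a * exp (l*y) + (1 - a) * exp (-(l*y))"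
    by (simp add: algebra_simps)
  moreover have "l * z = a * (l*y) + (1 - a) * (-(l*y))" by (subst zeq) (simp add: algebra_simps)
  moreover have "a * exp (l*y) + (1 - a) * exp (-(l*y)) = cosh (l * y) + sinh (l * y) / y * z"
    using yp by (simp add: a_def cosh_def sinh_def field_simps)
  ultimately show ?thesis using False by simp
qed

lemma ln_sum_bound:
  fixes a :: "nat \<Rightarrow> real" and c :: real
  assumes c: "c > 0" and a: "\<And>s. a s \<ge> 0"
  shows "(\<Sum>s=1..t. a s / (c + (\<Sum>r=1..s. a r))) \<le> ln ((c + (\<Sum>r=1..t. a r)) / c)"
proof (induction t)
  case 0 thus ?case using c by simp
next
  case (Suc t)
  define P where "P = c + (\<Sum>r=1..t. a r)"
  have Pp: "P > 0" unfolding P_def using c a by (intro add_pos_nonneg sum_nonneg) auto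
  have Q: "c + (\<Sum>r=1..Suc t. a r) = P + a (Suc t)" unfolding P_def by simp
  have Qp: "P + a (Suc t) > 0" using Pp a[of "Suc t"] by simp
  have "ln (P / (P + a (Suc t))) \<le> P / (P + a (Suc t)) - 1"
    by (rule ln_le_minus_one) (use Pp Qp in simp)
  also have "\<dots> = - (a (Suc t) / (P + a (Suc t)))" using Qp by (simp add: field_simps)
  finally have step: "a (Suc t) / (P + a (Suc t)) \<le> ln ((P + a (Suc t)) / c) - ln (P / c)"
    using Pp Qp c by (simp add: ln_div)
  have "(\<Sum>s=1..Suc t. a s / (c + (\<Sum>r=1..s. a r))) =
        (\<Sum>s=1..t. a s / (c + (\<Sum>r=1..s. a r))) + a (Suc t) / (P + a (Suc t))"
    using Q by simp
  also have "\<dots> \<le> ln (P / c) + (ln ((P + a (Suc t)) / c) - ln (P / c))"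
    using Suc.IH step unfolding P_def by (intro add_mono) auto
  finally show ?case unfolding P_def by (simp add: add.assoc)
qed

lemma sqrt_diff_le:
  fixes c u v :: real
  assumes "c \<ge> 0" "u \<ge> 0" "v \<ge> 0"
  shows "\<bar>sqrt (c + u\<^sup>2) - sqrt (c + v\<^sup>2)\<bar> \<le> \<bar>u - v\<bar>"
proof -
  have su: "sqrt (c + u\<^sup>2) \<ge> u" using assms by (intro real_le_rsqrt) auto
  have sv: "sqrt (c + v\<^sup>2) \<ge> v" using assms by (intro real_le_rsqrt) auto
  define A where "A = sqrt (c + u\<^sup>2)"
  define B where "B = sqrt (c + v\<^sup>2)"
  have A2: "A * A = c + u\<^sup>2" unfolding A_def using assms by (simp flip: power2_eq_square)
  have B2: "B * B = c + v\<^sup>2" unfolding B_def using assms by (simp flip: power2_eq_square)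
  have "(A - B) * (A + B) = (u - v) * (u + v)"
    using A2 B2 by (simp add: algebra_simps power2_eq_square)
  hence "\<bar>A - B\<bar> * \<bar>A + B\<bar> = \<bar>u - v\<bar> * \<bar>u + v\<bar>" by (metis abs_mult)
  hence eq: "\<bar>sqrt (c + u\<^sup>2) - sqrt (c + v\<^sup>2)\<bar> * (sqrt (c + u\<^sup>2) + sqrt (c + v\<^sup>2)) = \<bar>u - v\<bar> * (u + v)"
    using assms su sv unfolding A_def B_def by simp
  show ?thesis
  proof (cases "u + v = 0")
    case True
    hence "u = 0" "v = 0" using assms by auto
    thus ?thesis by simp
  next
    case False
    hence pos: "u + v > 0" using assms by simp
    have "\<bar>sqrt (c + u\<^sup>2) - sqrt (c + v\<^sup>2)\<bar> * (u + v) \<le> \<bar>sqrt (c + u\<^sup>2) - sqrt (c + v\<^sup>2)\<bar> * (sqrt (c + u\<^sup>2) + sqrt (c + v\<^sup>2))"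
      using su sv by (intro mult_left_mono) auto
    also have "\<dots> = \<bar>u - v\<bar> * (u + v)" by (rule eq)
    finally show ?thesis using pos by simp
  qed
qed

lemma norm_gap:
  fixes G g :: "'d::euclidean_space" and ss :: real
  assumes ss: "ss \<ge> 0" and xi: "norm (g - G) \<le> ss"
  shows "\<bar>norm g - sqrt ((norm G)\<^sup>2 + ss\<^sup>2)\<bar> \<le> 3/2 * ss"
proof -
  define Gn where "Gn = norm G"
  define e where "e = norm (g - G)"
  have u1: "norm g \<le> Gn + e" unfolding Gn_def e_def using norm_triangle_ineq[of G "g - G"] by simp
  have u2: "norm g \<ge> Gn - e" unfolding Gn_def e_def using norm_triangle_ineq2[of G "G - g"] norm_minus_commute[of G g] by simp
  have Gn0: "Gn \<ge> 0" unfolding Gn_def by simp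
  have e: "e \<le> ss" "e \<ge> 0" using xi unfolding e_def by auto
  have v1: "sqrt (Gn\<^sup>2 + ss\<^sup>2) \<ge> Gn" by (intro real_le_rsqrt) auto
  have a: "norm g - sqrt (Gn\<^sup>2 + ss\<^sup>2) \<le> 3/2 * ss" using u1 v1 e ss by linarith
  have b: "sqrt (Gn\<^sup>2 + ss\<^sup>2) - norm g \<le> 3/2 * ss"
  proof (cases "Gn \<ge> ss")
    case True
    have "ss * ss \<le> Gn * ss" using True ss by (intro mult_right_mono) auto
    hence "Gn\<^sup>2 + ss\<^sup>2 \<le> (Gn + ss / 2)\<^sup>2"
      by (simp add: power2_eq_square algebra_simps, insert mult_nonneg_nonneg[OF ss ss], linarith)
    hence "sqrt (Gn\<^sup>2 + ss\<^sup>2) \<le> Gn + ss / 2" using Gn0 ss by (intro real_le_lsqrt) auto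
    thus ?thesis using u2 e by linarith
  next
    case False
    have "sqrt (Gn\<^sup>2 + ss\<^sup>2) \<le> 3/2 * ss"
    proof (rule real_le_lsqrt)
      have "Gn * Gn \<le> ss * ss" using False Gn0 ss by (intro mult_mono) auto
      thus "Gn\<^sup>2 + ss\<^sup>2 \<le> (3 / 2 * ss)\<^sup>2"
        by (simp add: power2_eq_square, insert mult_nonneg_nonneg[OF ss ss], linarith)
    qed (use ss in auto)
    thus ?thesis using norm_ge_zero[of g] by linarith
  qed
  show ?thesis using a b unfolding Gn_def by linarith
qed

lemma correction:
  fixes G g :: "'d::euclidean_space" and Bp eta sigma0 sigma1 :: real
  assumes Bp: "Bp > 0" and eta: "eta \<ge> 0"
    and noise: "(norm (g - G))\<^sup>2 \<le> sigma0\<^sup>2 + sigma1\<^sup>2 * (norm G)\<^sup>2"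
  shows "(eta / sqrt (Bp + sigma0\<^sup>2 + (1 + sigma1\<^sup>2) * (norm G)\<^sup>2) - eta / sqrt (Bp + (norm g)\<^sup>2)) * (G \<bullet> g)
         \<le> 1/4 * (eta / sqrt (Bp + sigma0\<^sup>2 + (1 + sigma1\<^sup>2) * (norm G)\<^sup>2)) * (norm G)\<^sup>2
           + 9/4 * eta * sqrt (sigma0\<^sup>2 + sigma1\<^sup>2 * (norm G)\<^sup>2) * (norm g)\<^sup>2 / (Bp + (norm g)\<^sup>2)"
proof -
  define ss where "ss = sqrt (sigma0\<^sup>2 + sigma1\<^sup>2 * (norm G)\<^sup>2)"
  define b where "b = sqrt (Bp + (norm g)\<^sup>2)"
  define bt where "bt = sqrt (Bp + sigma0\<^sup>2 + (1 + sigma1\<^sup>2) * (norm G)\<^sup>2)"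
  define Gn where "Gn = norm G"
  define gn where "gn = norm g"
  have ss0: "ss \<ge> 0" unfolding ss_def by simp
  have ss2: "ss\<^sup>2 = sigma0\<^sup>2 + sigma1\<^sup>2 * (norm G)\<^sup>2" unfolding ss_def by simp
  have xi: "norm (g - G) \<le> ss" unfolding ss_def using noise by (simp add: real_le_rsqrt)
  have Gn0: "Gn \<ge> 0" and gn0: "gn \<ge> 0" unfolding Gn_def gn_def by auto
  have bpos: "b > 0" unfolding b_def using Bp by (intro real_sqrt_gt_zero add_pos_nonneg) auto
  have b2: "b\<^sup>2 = Bp + gn\<^sup>2" unfolding b_def gn_def using Bp by (subst real_sqrt_pow2) (auto intro: add_nonneg_nonneg)
  have btv: "bt = sqrt (Bp + (sqrt ((norm G)\<^sup>2 + ss\<^sup>2))\<^sup>2)"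
    unfolding bt_def using ss2 by (simp add: algebra_simps)
  have btpos: "bt > 0" unfolding bt_def using Bp by (intro real_sqrt_gt_zero add_pos_nonneg) auto
  have ssbt: "ss \<le> bt" unfolding bt_def ss_def using Bp
    by (intro real_sqrt_le_mono) (auto simp: algebra_simps)
  have gap: "\<bar>b - bt\<bar> \<le> 3/2 * ss"
  proof -
    have "\<bar>b - bt\<bar> \<le> \<bar>norm g - sqrt ((norm G)\<^sup>2 + ss\<^sup>2)\<bar>"
      unfolding b_def btv using Bp by (intro sqrt_diff_le) auto
    also have "\<dots> \<le> 3/2 * ss" by (rule norm_gap[OF ss0 xi])
    finally show ?thesis .
  qed
  have "(eta / bt - eta / b) * (G \<bullet> g) \<le> \<bar>eta / bt - eta / b\<bar> * \<bar>G \<bullet> g\<bar>"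
    by (metis abs_ge_self abs_mult)
  also have "\<dots> \<le> (eta * (3/2 * ss) / (b * bt)) * (Gn * gn)"
  proof (intro mult_mono)
    have "\<bar>eta / bt - eta / b\<bar> = eta * \<bar>b - bt\<bar> / (b * bt)"
      proof -
      have "eta / bt - eta / b = eta * (b - bt) / (b * bt)" using bpos btpos by (simp add: field_simps)
      thus ?thesis using bpos btpos eta by (simp add: abs_mult abs_div)
    qed
    also have "\<dots> \<le> eta * (3/2 * ss) / (b * bt)"
      using gap eta bpos btpos by (intro divide_right_mono mult_left_mono) auto
    finally show "\<bar>eta / bt - eta / b\<bar> \<le> eta * (3/2 * ss) / (b * bt)" .
    show "\<bar>G \<bullet> g\<bar> \<le> Gn * gn" unfolding Gn_def gn_def by (rule Cauchy_Schwarz_ineq2)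
  qed (use eta ss0 bpos btpos in auto)
  also have "\<dots> = (eta / bt) * (3/2 * ss * Gn * gn / b)" using bpos btpos by (simp add: field_simps)
  also have "\<dots> \<le> (eta / bt) * (1/4 * Gn\<^sup>2 + 9/4 * ss\<^sup>2 * gn\<^sup>2 / b\<^sup>2)"
  proof (intro mult_left_mono)
    have "0 \<le> 1/4 * (Gn - 3 * ss * gn / b)\<^sup>2" by simp
    also have "\<dots> = 1/4 * Gn\<^sup>2 + 9/4 * ss\<^sup>2 * gn\<^sup>2 / b\<^sup>2 - 3/2 * ss * Gn * gn / b"
      using bpos by (simp add: power2_eq_square field_simps)
    finally show "3/2 * ss * Gn * gn / b \<le> 1/4 * Gn\<^sup>2 + 9/4 * ss\<^sup>2 * gn\<^sup>2 / b\<^sup>2" by simp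
  qed (use eta btpos in auto)
  also have "\<dots> = 1/4 * (eta / bt) * Gn\<^sup>2 + 9/4 * eta * ss * gn\<^sup>2 / b\<^sup>2 * (ss / bt)"
    using btpos bpos by (simp add: power2_eq_square field_simps)
  also have "\<dots> \<le> 1/4 * (eta / bt) * Gn\<^sup>2 + 9/4 * eta * ss * gn\<^sup>2 / b\<^sup>2 * 1"
    using ssbt btpos eta ss0 by (intro add_left_mono mult_left_mono) auto
  finally show ?thesis unfolding ss_def[symmetric] b_def[symmetric] bt_def[symmetric]
    using b2 by (simp add: Gn_def gn_def)
qed

lemma sinh_le_x_exp: "x \<ge> 0 \<Longrightarrow> sinh x \<le> x * exp (x::real)"
proof -
  assume x: "x \<ge> 0"
  have "1 - 2 * x \<le> exp (- 2 * x)" using exp_ge_add_one_self[of "-2*x"] by simp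
  hence "exp x * (1 - 2 * x) \<le> exp x * exp (-2 * x)" by (intro mult_left_mono) auto
  also have "exp x * exp (-2 * x) = exp (-x)" by (simp flip: exp_add)
  finally show ?thesis by (simp add: sinh_def algebra_simps)
qed

lemma hcoef_bound:
  fixes l y B :: real
  assumes "l > 0" "0 \<le> y" "y \<le> B"
  shows "\<bar>if y = 0 then 0 else sinh (l * y) / y\<bar> \<le> l * exp (l * B)"
proof (cases "y = 0")
  case True thus ?thesis using assms by simp
next
  case False
  hence yp: "y > 0" using assms by simp
  have s0: "sinh (l * y) \<ge> 0" using assms by simp
  have "sinh (l * y) / y \<le> l * y * exp (l * y) / y"
    using sinh_le_x_exp[of "l*y"] assms yp by (intro divide_right_mono) auto
  also have "\<dots> = l * exp (l * y)" using yp by simp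
  also have "\<dots> \<le> l * exp (l * B)" using assms by (intro mult_left_mono) auto
  finally show ?thesis using False s0 yp by simp
qed

lemma subalg_chain:
  assumes "\<And>s. subalgebra (Fl (Suc s)) (Fl s)" "s \<le> t"
  shows "subalgebra (Fl t) (Fl s)"
  using assms(2)
proof (induction t)
  case 0 thus ?case by (simp add: subalgebra_def)
next
  case (Suc t)
  show ?case
  proof (cases "s = Suc t")
    case True thus ?thesis by (simp add: subalgebra_def)
  next
    case False
    hence "subalgebra (Fl t) (Fl s)" using Suc by simp
    thus ?thesis using assms(1)[of t] by (auto simp: subalgebra_def)
  qed
qed

lemma concentration:
  fixes M :: "'a measure" and Fl :: "nat \<Rightarrow> 'a measure"
    and Z Y :: "nat \<Rightarrow> 'a \<Rightarrow> real" and l B dl :: real and n :: nat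
  assumes P: "prob_space M"
    and sub: "\<And>s. subalgebra M (Fl s)" and mono: "\<And>s. subalgebra (Fl (Suc s)) (Fl s)"
    and Zm: "\<And>s. s \<in> {1..n} \<Longrightarrow> Z s \<in> borel_measurable (Fl (Suc s))"
    and Ym: "\<And>s. s \<in> {1..n} \<Longrightarrow> Y s \<in> borel_measurable (Fl s)"
    and Yb: "\<And>s x. s \<in> {1..n} \<Longrightarrow> x \<in> space M \<Longrightarrow> 0 \<le> Y s x \<and> Y s x \<le> B"
    and ZY: "\<And>s. s \<in> {1..n} \<Longrightarrow> AE x in M. \<bar>Z s x\<bar> \<le> Y s x"
    and orth: "\<And>s h C. s \<in> {1..n} \<Longrightarrow> h \<in> borel_measurable (Fl s) \<Longrightarrow>
                  (AE x in M. \<bar>h x\<bar> \<le> C) \<Longrightarrow> (\<integral>x. h x * Z s x \<partial>M) = 0"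
    and l: "l > 0" and dl: "dl > 0"
  shows "measure M {x \<in> space M. (\<Sum>s=1..n. Z s x) > l / 2 * (\<Sum>s=1..n. (Y s x)\<^sup>2) + ln (1 / dl) / l} \<le> dl"
proof -
  interpret prob_space M by (rule P)
  define a where "a = (\<lambda>s x. l * Z s x - l\<^sup>2 * (Y s x)\<^sup>2 / 2)"
  define W where "W = (\<lambda>k x. exp (\<Sum>s=1..k. a s x))"
  have subt: "subalgebra (Fl t) (Fl s)" if "s \<le> t" for s t using subalg_chain[of Fl, OF mono that] .
  have ZmM: "Z s \<in> borel_measurable M" if "s \<in> {1..n}" for s
    using measurable_from_subalg[OF sub Zm[OF that]] .
  have YmM: "Y s \<in> borel_measurable M" if "s \<in> {1..n}" for s
    using measurable_from_subalg[OF sub Ym[OF that]] .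
  have B0: "B \<ge> 0" if "n \<ge> 1"
  proof -
    obtain x where "x \<in> space M" using not_empty by blast
    thus ?thesis using Yb[of 1 x] that by auto
  qed
  have Wm: "W k \<in> borel_measurable (Fl (Suc k))" if "k \<le> n" for k
  proof -
    have "a s \<in> borel_measurable (Fl (Suc k))" if "s \<in> {1..k}" for s
    proof -
      have s: "s \<in> {1..n}" using that \<open>k \<le> n\<close> by auto
      have "Z s \<in> borel_measurable (Fl (Suc k))"
        using measurable_from_subalg[OF subt Zm[OF s]] that by auto
      moreover have "Y s \<in> borel_measurable (Fl (Suc k))"
        using measurable_from_subalg[OF subt Ym[OF s]] that by auto
      ultimately show ?thesis unfolding a_def by (intro borel_measurable_diff borel_measurable_times borel_measurable_divide borel_measurable_power) auto
    qed
    hence "(\<lambda>x. \<Sum>s=1..k. a s x) \<in> borel_measurable (Fl (Suc k))" by (intro borel_measurable_sum) auto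
    thus ?thesis unfolding W_def by (rule measurable_compose[OF _ borel_measurable_exp])
  qed
  have WmM: "W k \<in> borel_measurable M" if "k \<le> n" for k
    using measurable_from_subalg[OF sub Wm[OF that]] .
  have Wpos: "W k x > 0" for k x unfolding W_def by simp
  have Wbd: "AE x in M. W k x \<le> exp (real k * (l * B))" if "k \<le> n" for k
  proof -
    have "AE x in M. \<forall>s\<in>{1..k}. \<bar>Z s x\<bar> \<le> Y s x"
      using that by (intro AE_finite_allI) (auto intro!: ZY)
    thus ?thesis
    proof (rule AE_mp[OF _ AE_I2], intro impI)
      fix x assume x: "x \<in> space M" and h: "\<forall>s\<in>{1..k}. \<bar>Z s x\<bar> \<le> Y s x"
      have "(\<Sum>s=1..k. a s x) \<le> (\<Sum>s=1..k. l * B)"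
      proof (intro sum_mono)
        fix s assume s: "s \<in> {1..k}"
        hence sn: "s \<in> {1..n}" using that by auto
        have "\<bar>Z s x\<bar> \<le> Y s x" using h s by auto
        hence "Z s x \<le> B" using Yb[OF sn x] by linarith
        hence "l * Z s x \<le> l * B" using l by (intro mult_left_mono) auto
        moreover have "0 \<le> l\<^sup>2 * (Y s x)\<^sup>2 / 2" by simp
        ultimately show "a s x \<le> l * B" unfolding a_def by linarith
      qed
      thus "W k x \<le> exp (real k * (l * B))" unfolding W_def by simp
    qed
  qed
  have Wint: "integrable M (W k)" if "k \<le> n" for k
    by (rule integrable_const_bound[OF _ WmM[OF that]])
       (use Wbd[OF that] Wpos in \<open>auto elim!: AE_mp intro!: AE_I2 simp: less_imp_le\<close>)
  have EW: "(\<integral>x. W k x \<partial>M) \<le> 1" if "k \<le> n" for k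
    using that
  proof (induction k)
    case 0 thus ?case unfolding W_def by (simp add: prob_space)
  next
    case (Suc k)
    define s where "s = Suc k"
    have s: "s \<in> {1..n}" using Suc.prems unfolding s_def by auto
    have kn: "k \<le> n" using Suc.prems by simp
    define h where "h = (\<lambda>x. if Y s x = 0 then 0 else sinh (l * Y s x) / Y s x)"
    define H where "H = (\<lambda>x. W k x * exp (- (l\<^sup>2 * (Y s x)\<^sup>2 / 2)) * h x)"
    note Ym[OF s, measurable]
    have Wk[measurable]: "W k \<in> borel_measurable (Fl s)" using Wm[OF kn] unfolding s_def .
    have sinhm[measurable]: "(sinh :: real \<Rightarrow> real) \<in> borel_measurable borel"
      by (intro borel_measurable_continuous_onI continuous_intros)
    have hm[measurable]: "h \<in> borel_measurable (Fl s)" unfolding h_def by measurable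
    have Hm: "H \<in> borel_measurable (Fl s)" unfolding H_def by measurable
    have HmM: "H \<in> borel_measurable M" using measurable_from_subalg[OF sub Hm] .
    have hb: "\<bar>h x\<bar> \<le> l * exp (l * B)" if "x \<in> space M" for x
      unfolding h_def using hcoef_bound[OF l] Yb[OF s that] by auto
    have Hb: "AE x in M. \<bar>H x\<bar> \<le> exp (real k * (l * B)) * (l * exp (l * B))"
      using Wbd[OF kn]
    proof (rule AE_mp[OF _ AE_I2], intro impI)
      fix x assume x: "x \<in> space M" and w: "W k x \<le> exp (real k * (l * B))"
      have e1: "exp (- (l\<^sup>2 * (Y s x)\<^sup>2 / 2)) \<le> 1" by simp
      have "\<bar>H x\<bar> = W k x * exp (- (l\<^sup>2 * (Y s x)\<^sup>2 / 2)) * \<bar>h x\<bar>"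
        unfolding H_def using Wpos[of k x] by (simp add: abs_mult)
      also have "\<dots> \<le> exp (real k * (l * B)) * 1 * (l * exp (l * B))"
        using w e1 hb[OF x] Wpos[of k x] by (intro mult_mono) auto
      finally show "\<bar>H x\<bar> \<le> exp (real k * (l * B)) * (l * exp (l * B))" by simp
    qed
    have HZ0: "(\<integral>x. H x * Z s x \<partial>M) = 0" by (rule orth[OF s Hm Hb])
    have HZint: "integrable M (\<lambda>x. H x * Z s x)"
    proof (rule integrable_const_bound[where B="exp (real k * (l * B)) * (l * exp (l * B)) * B"])
      show "(\<lambda>x. H x * Z s x) \<in> borel_measurable M" using HmM ZmM[OF s] by (intro borel_measurable_times)
      show "AE x in M. norm (H x * Z s x) \<le> exp (real k * (l * B)) * (l * exp (l * B)) * B"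
        using Hb ZY[OF s]
      proof (rule AE_mp[OF _ AE_mp[OF _ AE_I2]], intro impI)
        fix x assume x: "x \<in> space M" and h1: "\<bar>H x\<bar> \<le> exp (real k * (l * B)) * (l * exp (l * B))"
          and h2: "\<bar>Z s x\<bar> \<le> Y s x"
        have "\<bar>Z s x\<bar> \<le> B" using h2 Yb[OF s x] by linarith
        thus "norm (H x * Z s x) \<le> exp (real k * (l * B)) * (l * exp (l * B)) * B"
          using h1 by (simp add: abs_mult) (intro mult_mono, auto)
      qed
    qed
    have pt: "AE x in M. W (Suc k) x \<le> W k x + H x * Z s x"
      using ZY[OF s]
    proof (rule AE_mp[OF _ AE_I2], intro impI)
      fix x assume x: "x \<in> space M" and zy: "\<bar>Z s x\<bar> \<le> Y s x"
      have Wsplit: "W (Suc k) x = W k x * (exp (- (l\<^sup>2 * (Y s x)\<^sup>2 / 2)) * exp (l * Z s x))"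
        unfolding W_def s_def a_def by (simp add: exp_add[symmetric] exp_diff algebra_simps)
      have "exp (l * Z s x) \<le> cosh (l * Y s x) + h x * Z s x"
        unfolding h_def by (rule exp_convex_bound[OF zy])
      hence "W (Suc k) x \<le> W k x * (exp (- (l\<^sup>2 * (Y s x)\<^sup>2 / 2)) * (cosh (l * Y s x) + h x * Z s x))"
        unfolding Wsplit using Wpos[of k x] by (intro mult_left_mono) auto
      also have "\<dots> = W k x * (exp (- (l\<^sup>2 * (Y s x)\<^sup>2 / 2)) * cosh (l * Y s x)) + H x * Z s x"
        unfolding H_def by (simp add: algebra_simps)
      also have "\<dots> \<le> W k x * 1 + H x * Z s x"
      proof -
        have "cosh (l * Y s x) \<le> exp ((l * Y s x)\<^sup>2 / 2)" by (rule cosh_le_exp_sq)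
        hence "exp (- (l\<^sup>2 * (Y s x)\<^sup>2 / 2)) * cosh (l * Y s x) \<le> exp (- (l\<^sup>2 * (Y s x)\<^sup>2 / 2)) * exp ((l * Y s x)\<^sup>2 / 2)"
          by (intro mult_left_mono) auto
        also have "\<dots> = 1" by (simp add: power_mult_distrib flip: exp_add)
        finally show ?thesis using Wpos[of k x] by (intro add_right_mono mult_left_mono) auto
      qed
      finally show "W (Suc k) x \<le> W k x + H x * Z s x" by simp
    qed
    have "(\<integral>x. W (Suc k) x \<partial>M) \<le> (\<integral>x. W k x + H x * Z s x \<partial>M)"
      by (rule integral_mono_AE[OF Wint[OF Suc.prems] _ pt]) (intro Bochner_Integration.integrable_add Wint[OF kn] HZint)
    also have "\<dots> = (\<integral>x. W k x \<partial>M) + (\<integral>x. H x * Z s x \<partial>M)"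
      by (rule Bochner_Integration.integral_add[OF Wint[OF kn] HZint])
    also have "\<dots> \<le> 1" using Suc.IH[OF kn] HZ0 by simp
    finally show ?case .
  qed
  have sub_set: "{x \<in> space M. (\<Sum>s=1..n. Z s x) > l / 2 * (\<Sum>s=1..n. (Y s x)\<^sup>2) + ln (1 / dl) / l}
      \<subseteq> {x \<in> space M. W n x \<ge> 1 / dl}"
  proof safe
    fix x assume x: "x \<in> space M" and gt: "(\<Sum>s=1..n. Z s x) > l / 2 * (\<Sum>s=1..n. (Y s x)\<^sup>2) + ln (1 / dl) / l"
    have "ln (1 / dl) < l * (\<Sum>s=1..n. Z s x) - l\<^sup>2 / 2 * (\<Sum>s=1..n. (Y s x)\<^sup>2)"
      using gt l by (simp add: field_simps power2_eq_square)
    also have "\<dots> = (\<Sum>s=1..n. a s x)" unfolding a_def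
      by (simp add: sum_subtractf sum_distrib_left sum_divide_distrib algebra_simps)
    finally have "exp (ln (1 / dl)) < W n x" unfolding W_def by simp
    thus "1 / dl \<le> W n x" using dl by simp
  qed
  have "measure M {x \<in> space M. (\<Sum>s=1..n. Z s x) > l / 2 * (\<Sum>s=1..n. (Y s x)\<^sup>2) + ln (1 / dl) / l}
      \<le> measure M {x \<in> space M. W n x \<ge> 1 / dl}"
    by (rule finite_measure_mono[OF sub_set]) (use WmM[of n] in measurable)
  also have "\<dots> \<le> (\<integral>x. W n x \<partial>M) / (1 / dl)"
    by (rule integral_Markov_inequality_measure[OF Wint]) (use WmM Wpos dl in \<open>auto simp: less_imp_le\<close>)
  also have "\<dots> \<le> 1 / (1 / dl)" using EW[of n] dl by (intro divide_right_mono) auto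
  finally show ?thesis by simp
qed

locale ada =
  fixes M :: "'a measure"
    and f :: "'d::euclidean_space \<Rightarrow> real" and G :: "'d \<Rightarrow> 'd"
    and g :: "nat \<Rightarrow> 'a \<Rightarrow> 'd"
    and w1 :: 'd and beta fstar eta gamma sigma0 sigma1 :: real and T :: nat
  assumes P: "prob_space M"
    and grad: "\<And>x. (f has_derivative (\<lambda>h. G x \<bullet> h)) (at x)"
    and smooth: "\<And>x y. norm (G x - G y) \<le> beta * norm (x - y)"
    and fmin: "\<And>x. fstar \<le> f x"
    and eta: "eta > 0" and gamma: "gamma > 0"
    and sig0: "sigma0 \<ge> 0" and sig1: "sigma1 \<ge> 0"
    and meas: "\<And>t. g t \<in> borel_measurable M"
    and unbiased: "\<And>t v. t \<in> {1..T} \<Longrightarrow>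
       AE x in M. real_cond_exp M (nat_filt M g t) (\<lambda>x. g t x \<bullet> v) x
                  = G (ada_w w1 eta gamma g t x) \<bullet> v"
    and noise: "\<And>t. t \<in> {1..T} \<Longrightarrow>
       AE x in M. (norm (g t x - G (ada_w w1 eta gamma g t x)))\<^sup>2
                  \<le> sigma0\<^sup>2 + sigma1\<^sup>2 * (norm (G (ada_w w1 eta gamma g t x)))\<^sup>2"
begin

abbreviation "w \<equiv> ada_w w1 eta gamma g"
abbreviation "Fl \<equiv> nat_filt M g"

definition "Bs t x = gamma\<^sup>2 + (\<Sum>s=1..t. (norm (g s x))\<^sup>2)"
definition "Bd = norm (G w1) + beta * eta * real T"

lemma beta0: "beta \<ge> 0" using beta_nonneg[OF smooth] .

lemma w_Suc: "t \<ge> 1 \<Longrightarrow> w (Suc t) x = w t x - (eta / sqrt (Bs t x)) *\<^sub>R g t x"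
  by (simp add: Bs_def)

lemma Bs_pos: "Bs t x > 0"
  unfolding Bs_def using gamma by (intro add_pos_nonneg sum_nonneg) auto

lemma Bs_ge: "t \<ge> 1 \<Longrightarrow> (norm (g t x))\<^sup>2 \<le> Bs t x"
proof -
  assume t: "t \<ge> 1"
  have "(norm (g t x))\<^sup>2 \<le> (\<Sum>s=1..t. (norm (g s x))\<^sup>2)"
    using t by (intro member_le_sum) auto
  thus ?thesis unfolding Bs_def using zero_le_power2[of gamma] by linarith
qed

lemma Bs_Suc: "Bs (Suc t) x = Bs t x + (norm (g (Suc t) x))\<^sup>2"
  unfolding Bs_def by simp

lemma step_le: "t \<ge> 1 \<Longrightarrow> norm (w (Suc t) x - w t x) \<le> eta"
proof -
  assume t: "t \<ge> 1"
  have sq: "norm (g t x) \<le> sqrt (Bs t x)" using Bs_ge[OF t] by (simp add: real_le_rsqrt)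
  have "norm (w (Suc t) x - w t x) = eta / sqrt (Bs t x) * norm (g t x)"
    using w_Suc[OF t] eta Bs_pos[of t x] by simp
  also have "\<dots> \<le> eta / sqrt (Bs t x) * sqrt (Bs t x)"
    using sq eta Bs_pos[of t x] by (intro mult_left_mono) auto
  also have "\<dots> = eta" using Bs_pos[of t x] by simp
  finally show ?thesis .
qed

lemma w_dist: "t \<ge> 1 \<Longrightarrow> norm (w t x - w1) \<le> eta * (real t - 1)"
proof (induction t)
  case 0 thus ?case by simp
next
  case (Suc t)
  show ?case
  proof (cases "t = 0")
    case True thus ?thesis by simp
  next
    case False
    hence t: "t \<ge> 1" by simp
    have "norm (w (Suc t) x - w1) \<le> norm (w (Suc t) x - w t x) + norm (w t x - w1)"
      using norm_triangle_ineq[of "w (Suc t) x - w t x" "w t x - w1"] by simp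
    also have "\<dots> \<le> eta + eta * (real t - 1)" using step_le[OF t, of x] Suc.IH[OF t] by linarith
    finally show ?thesis by (simp add: algebra_simps)
  qed
qed

lemma G_bound: "t \<in> {1..T} \<Longrightarrow> norm (G (w t x)) \<le> Bd"
proof -
  assume t: "t \<in> {1..T}"
  have "norm (G (w t x)) \<le> norm (G w1) + norm (G (w t x) - G w1)"
    by (metis add.commute diff_add_cancel norm_triangle_ineq)
  also have "\<dots> \<le> norm (G w1) + beta * (eta * (real t - 1))"
  proof -
    have "norm (G (w t x) - G w1) \<le> beta * norm (w t x - w1)" by (rule smooth)
    also have "\<dots> \<le> beta * (eta * (real t - 1))" using w_dist[of t x] t beta0 by (intro mult_left_mono) auto
    finally show ?thesis by simp
  qed
  also have "\<dots> \<le> Bd"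
  proof -
    have "eta * (real t - 1) \<le> eta * real T" using t eta by (intro mult_left_mono) auto
    hence "beta * (eta * (real t - 1)) \<le> beta * (eta * real T)" using beta0 by (rule mult_left_mono)
    thus ?thesis unfolding Bd_def by simp
  qed
  finally show ?thesis .
qed

lemma Bd0: "Bd \<ge> 0" unfolding Bd_def using beta0 eta by simp

lemma gen_Pow: "(\<Union>s\<in>{1..<t}. {g s -` B \<inter> space M | B. B \<in> sets borel}) \<subseteq> Pow (space M)"
  by auto

lemma Fl_space[simp]: "space (Fl t) = space M"
  unfolding nat_filt_def by (simp add: space_measure_of_conv)

lemma Fl_sets: "sets (Fl t) = sigma_sets (space M) (\<Union>s\<in>{1..<t}. {g s -` B \<inter> space M | B. B \<in> sets borel})"
  unfolding nat_filt_def by (rule sets_measure_of[OF gen_Pow])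

lemma Fl_sub: "subalgebra M (Fl t)"
proof -
  have "(\<Union>s\<in>{1..<t}. {g s -` B \<inter> space M | B. B \<in> sets borel}) \<subseteq> sets M"
    using meas by (auto simp: measurable_def)
  hence "sigma_sets (space M) (\<Union>s\<in>{1..<t}. {g s -` B \<inter> space M | B. B \<in> sets borel}) \<subseteq> sets M"
    by (rule sets.sigma_sets_subset)
  thus ?thesis unfolding subalgebra_def Fl_sets by simp
qed

lemma Fl_mono: "subalgebra (Fl (Suc t)) (Fl t)"
proof -
  have "(\<Union>s\<in>{1..<t}. {g s -` B \<inter> space M | B. B \<in> sets borel}) \<subseteq> (\<Union>s\<in>{1..<Suc t}. {g s -` B \<inter> space M | B. B \<in> sets borel})"
    by (intro UN_mono) auto
  thus ?thesis unfolding subalgebra_def Fl_sets by (simp add: sigma_sets_subseteq)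
qed

lemma Fl_mono': "s \<le> t \<Longrightarrow> subalgebra (Fl t) (Fl s)"
  using subalg_chain[of Fl, OF Fl_mono] by blast

lemma g_Fl: "1 \<le> s \<Longrightarrow> s < t \<Longrightarrow> g s \<in> borel_measurable (Fl t)"
proof (rule measurableI)
  fix A :: "'d set" assume "1 \<le> s" "s < t" "A \<in> sets borel"
  hence "g s -` A \<inter> space M \<in> (\<Union>s\<in>{1..<t}. {g s -` B \<inter> space M | B. B \<in> sets borel})"
    by (intro UN_I[of s]) auto
  thus "g s -` A \<inter> space (Fl t) \<in> sets (Fl t)" unfolding Fl_sets by (auto intro: sigma_sets.Basic)
qed auto

lemma w_Fl: "t \<ge> 1 \<Longrightarrow> w t \<in> borel_measurable (Fl t)"
proof (induction t)
  case 0 thus ?case by simp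
next
  case (Suc t)
  show ?case
  proof (cases "t = 0")
    case True thus ?thesis by simp
  next
    case False
    hence t: "t \<ge> 1" by simp
    have wm[measurable]: "w t \<in> borel_measurable (Fl (Suc t))"
      using measurable_from_subalg[OF Fl_mono Suc.IH[OF t]] .
    have gm[measurable]: "g s \<in> borel_measurable (Fl (Suc t))" if "s \<in> {1..t}" for s
      using g_Fl[of s "Suc t"] that by auto
    have [measurable]: "g t \<in> borel_measurable (Fl (Suc t))" using g_Fl[of t "Suc t"] t by auto
    have "(\<lambda>x. w t x - (eta / sqrt (gamma\<^sup>2 + (\<Sum>s=1..t. (norm (g s x))\<^sup>2))) *\<^sub>R g t x) \<in> borel_measurable (Fl (Suc t))"
      using t by measurable
    thus ?thesis using False by simp
  qed
qed

lemma Gw_Fl: "t \<ge> 1 \<Longrightarrow> (\<lambda>x. G (w t x)) \<in> borel_measurable (Fl t)"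
proof -
  assume t: "t \<ge> 1"
  have "continuous_on UNIV G"
  proof (rule lipschitz_on_continuous_on)
    show "beta-lipschitz_on UNIV G" using smooth beta0 by (auto simp: lipschitz_on_def dist_norm)
  qed
  hence "G \<in> borel_measurable borel" by (rule borel_measurable_continuous_onI)
  thus ?thesis using w_Fl[OF t] by (rule measurable_compose[rotated])
qed


definition "gB = Bd + sqrt (sigma0\<^sup>2 + sigma1\<^sup>2 * Bd\<^sup>2)"

lemma xi_le: "t \<in> {1..T} \<Longrightarrow> AE x in M. norm (g t x - G (w t x)) \<le> sqrt (sigma0\<^sup>2 + sigma1\<^sup>2 * (norm (G (w t x)))\<^sup>2)"
  using noise by (rule AE_mp[OF _ AE_I2]) (auto intro: real_le_rsqrt)

lemma g_bound: "t \<in> {1..T} \<Longrightarrow> AE x in M. norm (g t x) \<le> gB"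
proof -
  assume t: "t \<in> {1..T}"
  show ?thesis using xi_le[OF t]
  proof (rule AE_mp[OF _ AE_I2], intro impI)
    fix x assume h: "norm (g t x - G (w t x)) \<le> sqrt (sigma0\<^sup>2 + sigma1\<^sup>2 * (norm (G (w t x)))\<^sup>2)"
    have Gb: "norm (G (w t x)) \<le> Bd" using G_bound[OF t] .
    have "(norm (G (w t x)))\<^sup>2 \<le> Bd\<^sup>2" using Gb by (intro power_mono) auto
    hence "sigma1\<^sup>2 * (norm (G (w t x)))\<^sup>2 \<le> sigma1\<^sup>2 * Bd\<^sup>2" by (intro mult_left_mono) auto
    hence "sqrt (sigma0\<^sup>2 + sigma1\<^sup>2 * (norm (G (w t x)))\<^sup>2) \<le> sqrt (sigma0\<^sup>2 + sigma1\<^sup>2 * Bd\<^sup>2)" by simp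
    moreover have "norm (g t x) \<le> norm (G (w t x)) + norm (g t x - G (w t x))"
      using norm_triangle_ineq[of "G (w t x)" "g t x - G (w t x)"] by simp
    ultimately show "norm (g t x) \<le> gB" unfolding gB_def using Gb h by linarith
  qed
qed

lemma sfs: "sigma_finite_subalgebra M (Fl t)"
proof (rule finite_measure_subalgebra_is_sigma_finite)
  show "finite_measure_subalgebra M (Fl t)"
    unfolding finite_measure_subalgebra_def finite_measure_subalgebra_axioms_def
    using P Fl_sub by (auto simp: prob_space_def)
qed

lemma orth:
  assumes s: "s \<in> {1..T}" and Vm: "V \<in> borel_measurable (Fl s)" and Vb: "AE x in M. norm (V x) \<le> C"
  shows "(\<integral>x. V x \<bullet> (g s x - G (w s x)) \<partial>M) = 0"
proof -
  interpret prob_space M by (rule P)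
  have s1: "s \<ge> 1" using s by simp
  have VmM[measurable]: "V \<in> borel_measurable M" using measurable_from_subalg[OF Fl_sub Vm] .
  have GwM[measurable]: "(\<lambda>x. G (w s x)) \<in> borel_measurable M" using measurable_from_subalg[OF Fl_sub Gw_Fl[OF s1]] .
  note meas[measurable]
  have C0: "AE x in M. norm (V x) \<le> max C 0" using Vb by (rule AE_mp[OF _ AE_I2]) auto
  have int1: "integrable M (\<lambda>x. (V x \<bullet> i) * (g s x \<bullet> i))" if i: "i \<in> Basis" for i
  proof (rule integrable_const_bound[where B="max C 0 * gB"])
    show "AE x in M. norm ((V x \<bullet> i) * (g s x \<bullet> i)) \<le> max C 0 * gB"
      using C0 g_bound[OF s]
    proof (rule AE_mp[OF _ AE_mp[OF _ AE_I2]], intro impI)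
      fix x assume a: "norm (V x) \<le> max C 0" and b: "norm (g s x) \<le> gB"
      have "\<bar>V x \<bullet> i\<bar> \<le> max C 0" using a Basis_le_norm[OF i, of "V x"] by linarith
      moreover have "\<bar>g s x \<bullet> i\<bar> \<le> gB" using b Basis_le_norm[OF i, of "g s x"] by linarith
      ultimately show "norm ((V x \<bullet> i) * (g s x \<bullet> i)) \<le> max C 0 * gB"
        by (simp add: abs_mult) (intro mult_mono, auto)
    qed
  qed measurable
  have int2: "integrable M (\<lambda>x. (V x \<bullet> i) * (G (w s x) \<bullet> i))" if i: "i \<in> Basis" for i
  proof (rule integrable_const_bound[where B="max C 0 * Bd"])
    show "AE x in M. norm ((V x \<bullet> i) * (G (w s x) \<bullet> i)) \<le> max C 0 * Bd"
      using C0
    proof (rule AE_mp[OF _ AE_I2], intro impI)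
      fix x assume a: "norm (V x) \<le> max C 0"
      have "\<bar>V x \<bullet> i\<bar> \<le> max C 0" using a Basis_le_norm[OF i, of "V x"] by linarith
      moreover have "\<bar>G (w s x) \<bullet> i\<bar> \<le> Bd" using G_bound[OF s, of x] Basis_le_norm[OF i, of "G (w s x)"] by linarith
      ultimately show "norm ((V x \<bullet> i) * (G (w s x) \<bullet> i)) \<le> max C 0 * Bd"
        by (simp add: abs_mult) (intro mult_mono, auto)
    qed
  qed measurable
  have eqi: "(\<integral>x. (V x \<bullet> i) * (g s x \<bullet> i) \<partial>M) = (\<integral>x. (V x \<bullet> i) * (G (w s x) \<bullet> i) \<partial>M)"
    if i: "i \<in> Basis" for i
  proof -
    have fm: "(\<lambda>x. V x \<bullet> i) \<in> borel_measurable (Fl s)" using Vm by measurable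
    have "(\<integral>x. (V x \<bullet> i) * (g s x \<bullet> i) \<partial>M) = (\<integral>x. (V x \<bullet> i) * real_cond_exp M (Fl s) (\<lambda>x. g s x \<bullet> i) x \<partial>M)"
      by (rule sigma_finite_subalgebra.real_cond_exp_intg(2)[OF sfs int1[OF i] fm, symmetric]) measurable
    also have "\<dots> = (\<integral>x. (V x \<bullet> i) * (G (w s x) \<bullet> i) \<partial>M)"
    proof (rule integral_cong_AE)
      show "(\<lambda>x. (V x \<bullet> i) * real_cond_exp M (Fl s) (\<lambda>x. g s x \<bullet> i) x) \<in> borel_measurable M"
        by measurable
      show "AE x in M. (V x \<bullet> i) * real_cond_exp M (Fl s) (\<lambda>x. g s x \<bullet> i) x = (V x \<bullet> i) * (G (w s x) \<bullet> i)"
        using unbiased[OF s, of i] by (rule AE_mp[OF _ AE_I2]) auto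
    qed measurable
    finally show ?thesis .
  qed
  have "(\<integral>x. V x \<bullet> (g s x - G (w s x)) \<partial>M) =
        (\<integral>x. (\<Sum>i\<in>Basis. (V x \<bullet> i) * (g s x \<bullet> i)) - (\<Sum>i\<in>Basis. (V x \<bullet> i) * (G (w s x) \<bullet> i)) \<partial>M)"
    by (simp add: inner_diff_right euclidean_inner[of "V _" "g s _"] euclidean_inner[of "V _" "G _"])
  also have "\<dots> = (\<Sum>i\<in>Basis. (\<integral>x. (V x \<bullet> i) * (g s x \<bullet> i) \<partial>M)) - (\<Sum>i\<in>Basis. (\<integral>x. (V x \<bullet> i) * (G (w s x) \<bullet> i) \<partial>M))"
    using int1 int2 by (simp add: Bochner_Integration.integral_diff Bochner_Integration.integrable_sum Bochner_Integration.integral_sum)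
  also have "\<dots> = 0" using eqi by simp
  finally show ?thesis .
qed

end

lemma concentration2:
  fixes M :: "'a measure" and Fl :: "nat \<Rightarrow> 'a measure"
    and Z Y R :: "nat \<Rightarrow> 'a \<Rightarrow> real" and kap mu B dl :: real and n :: nat
  assumes P: "prob_space M"
    and sub: "\<And>s. subalgebra M (Fl s)" and mono: "\<And>s. subalgebra (Fl (Suc s)) (Fl s)"
    and Zm: "\<And>s. s \<in> {1..n} \<Longrightarrow> Z s \<in> borel_measurable (Fl (Suc s))"
    and Ym: "\<And>s. s \<in> {1..n} \<Longrightarrow> Y s \<in> borel_measurable (Fl s)"
    and Yb: "\<And>s x. s \<in> {1..n} \<Longrightarrow> x \<in> space M \<Longrightarrow> 0 \<le> Y s x \<and> Y s x \<le> B"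
    and ZY: "\<And>s. s \<in> {1..n} \<Longrightarrow> AE x in M. \<bar>Z s x\<bar> \<le> Y s x"
    and orth: "\<And>s h C. s \<in> {1..n} \<Longrightarrow> h \<in> borel_measurable (Fl s) \<Longrightarrow>
                  (AE x in M. \<bar>h x\<bar> \<le> C) \<Longrightarrow> (\<integral>x. h x * Z s x \<partial>M) = 0"
    and YR: "\<And>s x. s \<in> {1..n} \<Longrightarrow> x \<in> space M \<Longrightarrow> (Y s x)\<^sup>2 \<le> kap * R s x"
    and R0: "\<And>s x. s \<in> {1..n} \<Longrightarrow> x \<in> space M \<Longrightarrow> 0 \<le> R s x"
    and kap: "kap \<ge> 0" and mu: "mu > 0" and dl: "dl > 0"
  shows "measure M {x \<in> space M. (\<Sum>s=1..n. Z s x) > mu * (\<Sum>s=1..n. R s x) + kap * ln (1 / dl) / (2 * mu)} \<le> dl"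
proof -
  interpret prob_space M by (rule P)
  show ?thesis
  proof (cases "kap = 0")
    case True
    have "AE x in M. \<forall>s\<in>{1..n}. \<bar>Z s x\<bar> \<le> Y s x" by (intro AE_finite_allI) (auto intro!: ZY)
    hence "AE x in M. x \<in> {x \<in> space M. (\<Sum>s=1..n. Z s x) > mu * (\<Sum>s=1..n. R s x) + kap * ln (1 / dl) / (2 * mu)} \<longrightarrow> x \<in> {}"
    proof (rule AE_mp[OF _ AE_I2], intro impI)
      fix x assume x: "x \<in> space M" and h: "\<forall>s\<in>{1..n}. \<bar>Z s x\<bar> \<le> Y s x"
        and inA: "x \<in> {x \<in> space M. (\<Sum>s=1..n. Z s x) > mu * (\<Sum>s=1..n. R s x) + kap * ln (1 / dl) / (2 * mu)}"
      have "Z s x = 0" if s: "s \<in> {1..n}" for s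
      proof -
        have "(Y s x)\<^sup>2 \<le> 0" using YR[OF s x] True by simp
        hence "Y s x = 0" by simp
        moreover have "\<bar>Z s x\<bar> \<le> Y s x" using h s by blast
        ultimately show ?thesis by simp
      qed
      hence "(\<Sum>s=1..n. Z s x) = 0" by simp
      moreover have "0 \<le> mu * (\<Sum>s=1..n. R s x)" using mu R0[OF _ x] by (intro mult_nonneg_nonneg sum_nonneg) auto
      ultimately show "x \<in> {}" using True inA by auto
    qed
    hence "measure M {x \<in> space M. (\<Sum>s=1..n. Z s x) > mu * (\<Sum>s=1..n. R s x) + kap * ln (1 / dl) / (2 * mu)} \<le> measure M {}"
      by (intro finite_measure_mono_AE) auto
    thus ?thesis using dl by simp
  next
    case False
    hence kp: "kap > 0" using kap by simp
    define l where "l = 2 * mu / kap"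
    have lp: "l > 0" unfolding l_def using kp mu by simp
    have "AE x in M. x \<in> {x \<in> space M. (\<Sum>s=1..n. Z s x) > mu * (\<Sum>s=1..n. R s x) + kap * ln (1 / dl) / (2 * mu)}
          \<longrightarrow> x \<in> {x \<in> space M. (\<Sum>s=1..n. Z s x) > l / 2 * (\<Sum>s=1..n. (Y s x)\<^sup>2) + ln (1 / dl) / l}"
    proof (rule AE_I2, safe)
      fix x assume x: "x \<in> space M" and gt: "(\<Sum>s=1..n. Z s x) > mu * (\<Sum>s=1..n. R s x) + kap * ln (1 / dl) / (2 * mu)"
      have "l / 2 * (\<Sum>s=1..n. (Y s x)\<^sup>2) \<le> l / 2 * (\<Sum>s=1..n. kap * R s x)"
        using YR[OF _ x] lp by (intro mult_left_mono sum_mono) auto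
      also have "\<dots> = mu * (\<Sum>s=1..n. R s x)" unfolding l_def using kp by (simp add: sum_distrib_left[symmetric])
      finally have a: "l / 2 * (\<Sum>s=1..n. (Y s x)\<^sup>2) \<le> mu * (\<Sum>s=1..n. R s x)" .
      have b: "ln (1 / dl) / l = kap * ln (1 / dl) / (2 * mu)" unfolding l_def using kp mu by simp
      show "(\<Sum>s=1..n. Z s x) > l / 2 * (\<Sum>s=1..n. (Y s x)\<^sup>2) + ln (1 / dl) / l" using a b gt by linarith
    qed
    hence "measure M {x \<in> space M. (\<Sum>s=1..n. Z s x) > mu * (\<Sum>s=1..n. R s x) + kap * ln (1 / dl) / (2 * mu)}
        \<le> measure M {x \<in> space M. (\<Sum>s=1..n. Z s x) > l / 2 * (\<Sum>s=1..n. (Y s x)\<^sup>2) + ln (1 / dl) / l}"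
    proof (rule finite_measure_mono_AE)
      have "Z s \<in> borel_measurable M" if "s \<in> {1..n}" for s using measurable_from_subalg[OF sub Zm[OF that]] .
      moreover have "Y s \<in> borel_measurable M" if "s \<in> {1..n}" for s using measurable_from_subalg[OF sub Ym[OF that]] .
      ultimately show "{x \<in> space M. (\<Sum>s=1..n. Z s x) > l / 2 * (\<Sum>s=1..n. (Y s x)\<^sup>2) + ln (1 / dl) / l} \<in> sets M"
        by measurable
    qed
    also have "\<dots> \<le> dl"
      by (rule concentration[where M=M and Fl=Fl and Z=Z and Y=Y and n=n and B=B and l=l and dl=dl, OF P sub mono Zm Ym Yb ZY orth lp dl]) auto
    finally show ?thesis .
  qed
qed

lemma ln2_le: "ln (2::real) \<le> 8/9"
proof -
  have "1 + 8/9 + (8/9)\<^sup>2 / 2 \<le> exp (8/9::real)" by (rule exp_lower_Taylor_quadratic) simp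
  hence "2 \<le> exp (8/9::real)" by (simp add: power2_eq_square)
  thus ?thesis by (metis exp_le_cancel_iff exp_ln zero_less_numeral)
qed

lemma final_alg:
  fixes D1 L C1 eta beta sigma0 sigma1 l2 Fc cc :: real
  assumes nn: "D1 \<ge> 0" "L \<ge> 0" "C1 \<ge> 0" "eta \<ge> 0" "beta \<ge> 0" "sigma0 \<ge> 0" "sigma1 \<ge> 0"
    and l2: "0 \<le> l2" "l2 \<le> 8/9"
    and Fc: "Fc = 2 * D1 + (3 * L + 4 * C1) * eta * sigma0 + (9 * L\<^sup>2 + 16 * C1\<^sup>2) * eta\<^sup>2 * beta * sigma1\<^sup>2 + eta\<^sup>2 * beta * C1"
    and cc: "cc = sigma0 + sigma1 * sqrt (2 * beta * Fc)"
  shows "D1 + 2/3 * eta * cc * l2 * L + 9/4 * eta * cc * l2 * C1 + beta * eta\<^sup>2 / 2 * l2 * C1 \<le> Fc"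
proof -
  define A where "A = eta * l2 * (2/3 * L + 9/4 * C1)"
  have A0: "A \<ge> 0" unfolding A_def using nn l2 by simp
  have Fc0: "Fc \<ge> 0" unfolding Fc using nn by simp
  have lhs: "D1 + 2/3 * eta * cc * l2 * L + 9/4 * eta * cc * l2 * C1 + beta * eta\<^sup>2 / 2 * l2 * C1
      = D1 + A * sigma0 + (A * sigma1 * sqrt (2 * beta)) * sqrt Fc + l2 / 2 * beta * eta\<^sup>2 * C1"
    unfolding A_def cc by (simp add: real_sqrt_mult algebra_simps)
  have amgm: "(A * sigma1 * sqrt (2 * beta)) * sqrt Fc \<le> Fc / 2 + A\<^sup>2 * sigma1\<^sup>2 * beta"
  proof -
    have "0 \<le> (sqrt Fc - A * sigma1 * sqrt (2 * beta))\<^sup>2" by simp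
    also have "\<dots> = Fc - 2 * ((A * sigma1 * sqrt (2 * beta)) * sqrt Fc) + 2 * A\<^sup>2 * sigma1\<^sup>2 * beta"
      using Fc0 nn by (simp add: power2_eq_square algebra_simps real_sqrt_mult)
    finally show ?thesis by simp
  qed
  have t1: "2 * A * sigma0 \<le> (3 * L + 4 * C1) * eta * sigma0"
  proof -
    have "2 * A = eta * (l2 * (4/3) * L + l2 * (9/2) * C1)" unfolding A_def by (simp add: algebra_simps)
    also have "\<dots> \<le> eta * (3 * L + 4 * C1)"
    proof (intro mult_left_mono add_mono)
      show "l2 * (4/3) * L \<le> 3 * L" using l2 nn by (intro mult_right_mono) auto
      show "l2 * (9/2) * C1 \<le> 4 * C1" using l2 nn by (intro mult_right_mono) auto
    qed (use nn in auto)
    finally have "2 * A * sigma0 \<le> eta * (3 * L + 4 * C1) * sigma0" using nn by (intro mult_right_mono) auto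
    thus ?thesis by (simp add: algebra_simps)
  qed
  have t2: "2 * A\<^sup>2 * sigma1\<^sup>2 * beta \<le> (9 * L\<^sup>2 + 16 * C1\<^sup>2) * eta\<^sup>2 * beta * sigma1\<^sup>2"
  proof -
    have "l2\<^sup>2 \<le> (8/9)\<^sup>2" by (rule power_mono) (use l2 in auto)
    moreover have "(8/9::real)\<^sup>2 = 64/81" by (simp add: power2_eq_square)
    ultimately have l2sq: "l2\<^sup>2 \<le> 64/81" by simp
    have "(2/3 * L + 9/4 * C1)\<^sup>2 \<le> 2 * ((2/3 * L)\<^sup>2 + (9/4 * C1)\<^sup>2)"
      using sum_squares_ge_zero[of "2/3*L - 9/4*C1" 0] by (simp add: power2_eq_square algebra_simps)
    hence "2 * A\<^sup>2 \<le> 2 * eta\<^sup>2 * l2\<^sup>2 * (2 * ((2/3 * L)\<^sup>2 + (9/4 * C1)\<^sup>2))"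
      unfolding A_def by (simp add: power_mult_distrib mult_left_mono)
    also have "\<dots> \<le> 2 * eta\<^sup>2 * (64/81) * (2 * ((2/3 * L)\<^sup>2 + (9/4 * C1)\<^sup>2))"
      using l2sq by (intro mult_right_mono mult_left_mono) auto
    also have "\<dots> \<le> eta\<^sup>2 * (9 * L\<^sup>2 + 16 * C1\<^sup>2)"
      using nn by (simp add: power2_eq_square algebra_simps)
    finally have "2 * A\<^sup>2 \<le> eta\<^sup>2 * (9 * L\<^sup>2 + 16 * C1\<^sup>2)" .
    hence "2 * A\<^sup>2 * (sigma1\<^sup>2 * beta) \<le> eta\<^sup>2 * (9 * L\<^sup>2 + 16 * C1\<^sup>2) * (sigma1\<^sup>2 * beta)"
      using nn by (intro mult_right_mono) auto
    thus ?thesis by (simp add: algebra_simps)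
  qed
  have t3: "l2 * beta * eta\<^sup>2 * C1 \<le> eta\<^sup>2 * beta * C1"
  proof -
    have "l2 * (beta * eta\<^sup>2 * C1) \<le> 1 * (beta * eta\<^sup>2 * C1)" using l2 nn by (intro mult_right_mono) auto
    thus ?thesis by (simp add: algebra_simps)
  qed
  have t1': "A * sigma0 \<le> (3 * L + 4 * C1) * eta * sigma0 / 2" using t1 by simp
  have t2': "A\<^sup>2 * sigma1\<^sup>2 * beta \<le> (9 * L\<^sup>2 + 16 * C1\<^sup>2) * eta\<^sup>2 * beta * sigma1\<^sup>2 / 2" using t2 by simp
  have t3': "l2 / 2 * beta * eta\<^sup>2 * C1 \<le> eta\<^sup>2 * beta * C1 / 2" using t3 by simp
  show ?thesis unfolding lhs using amgm t1' t2' t3' Fc by linarith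
qed


context ada begin

lemma one_step: "s \<ge> 1 \<Longrightarrow> f (w (Suc s) x) \<le> f (w s x) - (eta / sqrt (Bs s x)) * (G (w s x) \<bullet> g s x)
    + beta / 2 * (eta / sqrt (Bs s x))\<^sup>2 * (norm (g s x))\<^sup>2"
proof -
  assume s: "s \<ge> 1"
  have d: "w (Suc s) x - w s x = - ((eta / sqrt (Bs s x)) *\<^sub>R g s x)" using w_Suc[OF s, of x] by simp
  have "f (w (Suc s) x) \<le> f (w s x) + G (w s x) \<bullet> (w (Suc s) x - w s x) + beta / 2 * (norm (w (Suc s) x - w s x))\<^sup>2"
    by (rule descent_lemma[OF grad smooth])
  also have "\<dots> = f (w s x) - (eta / sqrt (Bs s x)) * (G (w s x) \<bullet> g s x) + beta / 2 * (eta / sqrt (Bs s x))\<^sup>2 * (norm (g s x))\<^sup>2"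
    unfolding d using eta Bs_pos[of s x] by (simp add: power_mult_distrib power_divide abs_of_nonneg)
  finally show ?thesis .
qed

lemma telescope: "t \<ge> 1 \<Longrightarrow> f (w (Suc t) x) \<le> f w1 + (\<Sum>s=1..t. - (eta / sqrt (Bs s x)) * (G (w s x) \<bullet> g s x)
    + beta / 2 * (eta / sqrt (Bs s x))\<^sup>2 * (norm (g s x))\<^sup>2)"
proof (induction t rule: dec_induct)
  case base
  show ?case using one_step[of 1 x] by simp
next
  case (step t)
  have "f (w (Suc (Suc t)) x) \<le> f (w (Suc t) x) - (eta / sqrt (Bs (Suc t) x)) * (G (w (Suc t) x) \<bullet> g (Suc t) x)
    + beta / 2 * (eta / sqrt (Bs (Suc t) x))\<^sup>2 * (norm (g (Suc t) x))\<^sup>2" by (rule one_step) simp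
  thus ?case using step.IH by simp
qed

lemma g_sq_le: "(norm (g s x))\<^sup>2 \<le> 2 * (norm (G (w s x)))\<^sup>2 + 2 * (norm (g s x - G (w s x)))\<^sup>2"
proof -
  have "norm (g s x) \<le> norm (G (w s x)) + norm (g s x - G (w s x))"
    using norm_triangle_ineq[of "G (w s x)" "g s x - G (w s x)"] by simp
  hence "(norm (g s x))\<^sup>2 \<le> (norm (G (w s x)) + norm (g s x - G (w s x)))\<^sup>2"
    by (intro power_mono) auto
  also have "\<dots> \<le> 2 * (norm (G (w s x)))\<^sup>2 + 2 * (norm (g s x - G (w s x)))\<^sup>2"
    using sum_squares_ge_zero[of "norm (G (w s x)) - norm (g s x - G (w s x))" 0]
    by (simp add: power2_eq_square algebra_simps)
  finally show ?thesis .
qed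

lemma Bs_bound:
  assumes nx: "\<forall>s\<in>{1..T}. (norm (g s x - G (w s x)))\<^sup>2 \<le> sigma0\<^sup>2 + sigma1\<^sup>2 * (norm (G (w s x)))\<^sup>2"
    and t: "t \<le> T"
  shows "Bs t x \<le> gamma\<^sup>2 + (2 * sigma0\<^sup>2 * T + 8 * (1 + sigma1\<^sup>2) * (eta\<^sup>2 * beta\<^sup>2 * T ^ 3 + beta * (f w1 - fstar) * T))"
proof -
  define K where "K = 2 * sigma0\<^sup>2 + (1 + sigma1\<^sup>2) * (4 * beta * (f w1 - fstar) * 2 + 4 * beta\<^sup>2 * eta\<^sup>2 * T\<^sup>2)"
  have D10: "f w1 - fstar \<ge> 0" using fmin[of w1] by simp
  have Gw1: "(norm (G w1))\<^sup>2 \<le> 2 * beta * (f w1 - fstar)" by (rule grad_sq_bound[OF grad smooth fmin])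
  have each: "(norm (g s x))\<^sup>2 \<le> K" if s: "s \<in> {1..T}" for s
  proof -
    have Gb: "norm (G (w s x)) \<le> norm (G w1) + beta * eta * T" using G_bound[OF s] unfolding Bd_def .
    have "(norm (G (w s x)))\<^sup>2 \<le> (norm (G w1) + beta * eta * T)\<^sup>2" using Gb by (intro power_mono) auto
    also have "\<dots> \<le> 2 * (norm (G w1))\<^sup>2 + 2 * (beta * eta * T)\<^sup>2"
      using sum_squares_ge_zero[of "norm (G w1) - beta * eta * T" 0] by (simp add: power2_eq_square algebra_simps)
    also have "\<dots> \<le> 4 * beta * (f w1 - fstar) + 2 * beta\<^sup>2 * eta\<^sup>2 * T\<^sup>2"
      using Gw1 by (simp add: power_mult_distrib)
    finally have GG: "(norm (G (w s x)))\<^sup>2 \<le> 4 * beta * (f w1 - fstar) + 2 * beta\<^sup>2 * eta\<^sup>2 * T\<^sup>2" .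
    have "(norm (g s x))\<^sup>2 \<le> 2 * (norm (G (w s x)))\<^sup>2 + 2 * (sigma0\<^sup>2 + sigma1\<^sup>2 * (norm (G (w s x)))\<^sup>2)"
      using g_sq_le[of s x] nx s by fastforce
    also have "\<dots> = 2 * sigma0\<^sup>2 + 2 * (1 + sigma1\<^sup>2) * (norm (G (w s x)))\<^sup>2" by (simp add: algebra_simps)
    also have "\<dots> \<le> 2 * sigma0\<^sup>2 + 2 * (1 + sigma1\<^sup>2) * (4 * beta * (f w1 - fstar) + 2 * beta\<^sup>2 * eta\<^sup>2 * T\<^sup>2)"
      using GG by (intro add_left_mono mult_left_mono) auto
    also have "\<dots> = K" unfolding K_def by (simp add: algebra_simps)
    finally show ?thesis .
  qed
  have "(\<Sum>s=1..t. (norm (g s x))\<^sup>2) \<le> (\<Sum>s=1..t. K)" using each t by (intro sum_mono) auto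
  also have "\<dots> = real t * K" by simp
  also have "\<dots> \<le> real T * K"
    using t beta0 D10 by (intro mult_right_mono) (auto simp: K_def)
  also have "\<dots> \<le> 2 * sigma0\<^sup>2 * T + 8 * (1 + sigma1\<^sup>2) * (eta\<^sup>2 * beta\<^sup>2 * T ^ 3 + beta * (f w1 - fstar) * T)"
  proof -
    have "real T * K = 2 * sigma0\<^sup>2 * T + (1 + sigma1\<^sup>2) * (8 * (beta * (f w1 - fstar) * T) + 4 * (eta\<^sup>2 * beta\<^sup>2 * T ^ 3))"
      unfolding K_def by (simp add: algebra_simps power2_eq_square power3_eq_cube)
    also have "\<dots> \<le> 2 * sigma0\<^sup>2 * T + (1 + sigma1\<^sup>2) * (8 * (beta * (f w1 - fstar) * T) + 8 * (eta\<^sup>2 * beta\<^sup>2 * T ^ 3))"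
      using beta0 D10 by (intro add_left_mono mult_left_mono) auto
    finally show ?thesis by (simp add: algebra_simps)
  qed
  finally show ?thesis unfolding Bs_def by simp
qed

end

locale ada_d = ada +
  fixes delta :: real
  assumes delta: "0 < delta" "delta < 1"
begin

definition "D1 = f w1 - fstar"
definition "C1 = log 2 (1 + (2 * sigma0\<^sup>2 * T + 8 * (1 + sigma1\<^sup>2) * (eta\<^sup>2 * beta\<^sup>2 * T ^ 3 + beta * D1 * T)) / gamma\<^sup>2)"
definition "L = log 2 (T / delta)"
definition "Fc = 2 * D1 + (3 * L + 4 * C1) * eta * sigma0 + (9 * L\<^sup>2 + 16 * C1\<^sup>2) * eta\<^sup>2 * beta * sigma1\<^sup>2 + eta\<^sup>2 * beta * C1"
definition "cc = sigma0 + sigma1 * sqrt (2 * beta * Fc)"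
definition "chi t x = (if f (w t x) - fstar \<le> Fc then 1 else 0 :: real)"
definition "bt t x = sqrt (Bs (t - 1) x + sigma0\<^sup>2 + (1 + sigma1\<^sup>2) * (norm (G (w t x)))\<^sup>2)"
definition "ss t x = sqrt (sigma0\<^sup>2 + sigma1\<^sup>2 * (norm (G (w t x)))\<^sup>2)"
definition "Z2 t x = - (chi t x * (eta / bt t x)) * (G (w t x) \<bullet> (g t x - G (w t x)))"
definition "Y2 t x = chi t x * (eta / bt t x) * norm (G (w t x)) * ss t x"
definition "R2 t x = chi t x * (eta / bt t x) * (norm (G (w t x)))\<^sup>2"
definition "Z3 t x = chi t x * (G (w t x) \<bullet> (G (w t x) - g t x))"
definition "Y3 t x = chi t x * norm (G (w t x)) * ss t x"
definition "K3 = sigma0\<^sup>2 + 2 * beta * sigma1\<^sup>2 * Fc"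
definition "sB = sqrt (sigma0\<^sup>2 + sigma1\<^sup>2 * Bd\<^sup>2)"

lemma D10: "D1 \<ge> 0" unfolding D1_def using fmin[of w1] by simp

lemma C10: "C1 \<ge> 0"
proof -
  have "0 \<le> (2 * sigma0\<^sup>2 * T + 8 * (1 + sigma1\<^sup>2) * (eta\<^sup>2 * beta\<^sup>2 * T ^ 3 + beta * D1 * T)) / gamma\<^sup>2"
    using D10 beta0 gamma by (intro divide_nonneg_pos add_nonneg_nonneg mult_nonneg_nonneg) auto
  thus ?thesis unfolding C1_def by simp
qed

lemma L0: "L \<ge> 0"
proof (cases "T = 0")
  case True thus ?thesis unfolding L_def by (simp add: log_def)
next
  case False
  hence "real T / delta \<ge> 1" using delta by (simp add: field_simps)
  thus ?thesis unfolding L_def by simp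
qed

lemma Fc_ge: "Fc \<ge> 2 * D1"
  unfolding Fc_def using L0 C10 eta beta0 sig0 sig1 by (simp add: add_nonneg_nonneg mult_nonneg_nonneg)

lemma Fc0: "Fc \<ge> 0" using Fc_ge D10 by simp

lemma chi01: "chi t x = 0 \<or> chi t x = 1" unfolding chi_def by simp

lemma ss0: "ss t x \<ge> 0" unfolding ss_def by simp

lemma bt_ge_gamma: "t \<ge> 1 \<Longrightarrow> bt t x \<ge> gamma"
proof -
  assume t: "t \<ge> 1"
  have "Bs (t - 1) x \<ge> gamma\<^sup>2" unfolding Bs_def by (simp add: sum_nonneg)
  hence "gamma\<^sup>2 \<le> Bs (t - 1) x + sigma0\<^sup>2 + (1 + sigma1\<^sup>2) * (norm (G (w t x)))\<^sup>2"
    by (smt (verit) mult_nonneg_nonneg zero_le_power2)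
  hence "sqrt (gamma\<^sup>2) \<le> bt t x" unfolding bt_def by (rule real_sqrt_le_mono)
  thus ?thesis using gamma by simp
qed

lemma bt_pos: assumes "t \<ge> 1" shows "bt t x > 0" using bt_ge_gamma[OF assms, of x] gamma by linarith

lemma ss_le_bt: "ss t x \<le> bt t x"
  unfolding ss_def bt_def
  by (intro real_sqrt_le_mono) (auto simp: algebra_simps Bs_def intro!: add_nonneg_nonneg sum_nonneg)

lemma ss_le_sB: "t \<in> {1..T} \<Longrightarrow> ss t x \<le> sB"
proof -
  assume t: "t \<in> {1..T}"
  have "(norm (G (w t x)))\<^sup>2 \<le> Bd\<^sup>2" using G_bound[OF t, of x] by (intro power_mono) auto
  hence "sigma1\<^sup>2 * (norm (G (w t x)))\<^sup>2 \<le> sigma1\<^sup>2 * Bd\<^sup>2" by (intro mult_left_mono) auto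
  thus ?thesis unfolding ss_def sB_def by simp
qed

lemma grad_chi: "chi t x = 1 \<Longrightarrow> (norm (G (w t x)))\<^sup>2 \<le> 2 * beta * Fc"
proof -
  assume c: "chi t x = 1"
  hence "f (w t x) - fstar \<le> Fc" unfolding chi_def by (simp split: if_splits)
  hence "2 * beta * (f (w t x) - fstar) \<le> 2 * beta * Fc" using beta0 by (intro mult_left_mono) auto
  thus ?thesis using grad_sq_bound[OF grad smooth fmin, of "w t x"] by linarith
qed

lemma ss_chi_K3: "chi t x = 1 \<Longrightarrow> (ss t x)\<^sup>2 \<le> K3"
proof -
  assume c: "chi t x = 1"
  have "sigma1\<^sup>2 * (norm (G (w t x)))\<^sup>2 \<le> sigma1\<^sup>2 * (2 * beta * Fc)"
    using grad_chi[OF c] by (intro mult_left_mono) auto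
  thus ?thesis unfolding ss_def K3_def by (simp add: algebra_simps)
qed

lemma ss_chi_cc: "chi t x = 1 \<Longrightarrow> ss t x \<le> cc"
proof -
  assume c: "chi t x = 1"
  have s2: "(sqrt (2 * beta * Fc))\<^sup>2 = 2 * beta * Fc" using beta0 Fc0 by simp
  have "(ss t x)\<^sup>2 \<le> sigma0\<^sup>2 + sigma1\<^sup>2 * (2 * beta * Fc)" using ss_chi_K3[OF c] unfolding K3_def by (simp add: algebra_simps)
  also have "\<dots> \<le> cc\<^sup>2" unfolding cc_def power2_sum using s2 sig0 sig1
    by (simp add: power_mult_distrib)
  finally have "(ss t x)\<^sup>2 \<le> cc\<^sup>2" .
  moreover have "cc \<ge> 0" unfolding cc_def using sig0 sig1 beta0 Fc0 by (intro add_nonneg_nonneg mult_nonneg_nonneg) auto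
  ultimately show ?thesis using ss0 by (simp add: power2_le_iff_abs_le)
qed

lemma f_borel[measurable]: "f \<in> borel_measurable borel"
proof -
  have "continuous_on UNIV f"
    using grad by (intro continuous_at_imp_continuous_on) (auto intro: has_derivative_continuous)
  thus ?thesis by (rule borel_measurable_continuous_onI)
qed

lemma Bs_Fl: "t \<ge> 1 \<Longrightarrow> Bs (t - 1) \<in> borel_measurable (Fl t)"
proof -
  assume t: "t \<ge> 1"
  have [measurable]: "g s \<in> borel_measurable (Fl t)" if "s \<in> {1..t-1}" for s using g_Fl[of s t] that t by auto
  show ?thesis unfolding Bs_def by measurable
qed

lemma G_borel[measurable]: "G \<in> borel_measurable borel"
proof -
  have "continuous_on UNIV G"
  proof (rule lipschitz_on_continuous_on)
    show "beta-lipschitz_on UNIV G" using smooth beta0 by (auto simp: lipschitz_on_def dist_norm)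
  qed
  thus ?thesis by (rule borel_measurable_continuous_onI)
qed

lemma meas_Fl:
  assumes t: "t \<ge> 1"
  shows "chi t \<in> borel_measurable (Fl t)" "bt t \<in> borel_measurable (Fl t)" "ss t \<in> borel_measurable (Fl t)"
    "Y2 t \<in> borel_measurable (Fl t)" "R2 t \<in> borel_measurable (Fl t)" "Y3 t \<in> borel_measurable (Fl t)"
proof -
  note w_Fl[OF t, measurable] Bs_Fl[OF t, measurable]
  show c[measurable]: "chi t \<in> borel_measurable (Fl t)" unfolding chi_def by measurable
  show b[measurable]: "bt t \<in> borel_measurable (Fl t)" unfolding bt_def by measurable
  show s[measurable]: "ss t \<in> borel_measurable (Fl t)" unfolding ss_def by measurable
  show "Y2 t \<in> borel_measurable (Fl t)" unfolding Y2_def by measurable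
  show "R2 t \<in> borel_measurable (Fl t)" unfolding R2_def by measurable
  show "Y3 t \<in> borel_measurable (Fl t)" unfolding Y3_def by measurable
qed

lemma meas_Z:
  assumes t: "t \<ge> 1"
  shows "Z2 t \<in> borel_measurable (Fl (Suc t))" "Z3 t \<in> borel_measurable (Fl (Suc t))"
proof -
  have sub: "subalgebra (Fl (Suc t)) (Fl t)" by (rule Fl_mono)
  note m1[measurable] = measurable_from_subalg[OF sub w_Fl[OF t]]
  note m2[measurable] = measurable_from_subalg[OF sub meas_Fl(1)[OF t]]
  note m3[measurable] = measurable_from_subalg[OF sub meas_Fl(2)[OF t]]
  have [measurable]: "g t \<in> borel_measurable (Fl (Suc t))" using g_Fl[of t "Suc t"] t by auto
  show "Z2 t \<in> borel_measurable (Fl (Suc t))" unfolding Z2_def by measurable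
  show "Z3 t \<in> borel_measurable (Fl (Suc t))" unfolding Z3_def by measurable
qed

end

context ada_d begin

lemma cc0: "cc \<ge> 0" unfolding cc_def using sig0 sig1 beta0 Fc0 by (intro add_nonneg_nonneg mult_nonneg_nonneg) auto

lemma orth_c:
  assumes s: "s \<in> {1..T}" and cm: "c \<in> borel_measurable (Fl s)" and cb: "\<And>x. \<bar>c x\<bar> \<le> cb"
    and hm: "h \<in> borel_measurable (Fl s)" and hb: "AE x in M. \<bar>h x\<bar> \<le> C"
  shows "(\<integral>x. h x * (c x * (G (w s x) \<bullet> (g s x - G (w s x)))) \<partial>M) = 0"
proof -
  have s1: "s \<ge> 1" using s by simp
  define V where "V = (\<lambda>x. (h x * c x) *\<^sub>R G (w s x))"
  have Vm: "V \<in> borel_measurable (Fl s)" unfolding V_def using hm cm w_Fl[OF s1] by measurable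
  have Vb: "AE x in M. norm (V x) \<le> C * cb * Bd"
    using hb
  proof (rule AE_mp[OF _ AE_I2], intro impI)
    fix x assume x: "x \<in> space M" and h: "\<bar>h x\<bar> \<le> C"
    have "norm (V x) = \<bar>h x\<bar> * \<bar>c x\<bar> * norm (G (w s x))" unfolding V_def by (simp add: abs_mult)
    also have "\<dots> \<le> C * cb * Bd"
      using h cb[of x] G_bound[OF s, of x] by (intro mult_mono) auto
    finally show "norm (V x) \<le> C * cb * Bd" .
  qed
  have "(\<integral>x. h x * (c x * (G (w s x) \<bullet> (g s x - G (w s x)))) \<partial>M) = (\<integral>x. V x \<bullet> (g s x - G (w s x)) \<partial>M)"
    unfolding V_def by (simp add: algebra_simps)
  also have "\<dots> = 0" by (rule orth[OF s Vm Vb])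
  finally show ?thesis .
qed

lemma ZY_gen:
  assumes s: "s \<in> {1..T}" and c0: "\<And>x. 0 \<le> c x"
  shows "AE x in M. \<bar>c x * (G (w s x) \<bullet> (g s x - G (w s x)))\<bar> \<le> c x * norm (G (w s x)) * ss s x"
  using xi_le[OF s]
proof (rule AE_mp[OF _ AE_I2], intro impI)
  fix x assume h: "norm (g s x - G (w s x)) \<le> sqrt (sigma0\<^sup>2 + sigma1\<^sup>2 * (norm (G (w s x)))\<^sup>2)"
  have "\<bar>G (w s x) \<bullet> (g s x - G (w s x))\<bar> \<le> norm (G (w s x)) * norm (g s x - G (w s x))"
    by (rule Cauchy_Schwarz_ineq2)
  also have "\<dots> \<le> norm (G (w s x)) * ss s x" unfolding ss_def using h by (intro mult_left_mono) auto
  finally show "\<bar>c x * (G (w s x) \<bullet> (g s x - G (w s x)))\<bar> \<le> c x * norm (G (w s x)) * ss s x"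
    using c0[of x] by (simp add: abs_mult mult.assoc mult_left_mono)
qed

lemma etabt_le: "s \<ge> 1 \<Longrightarrow> 0 \<le> eta / bt s x \<and> eta / bt s x \<le> eta / gamma"
  using bt_pos[of s x] bt_ge_gamma[of s x] eta gamma by (auto intro: divide_left_mono)

lemma conc_Z2:
  assumes t: "t \<in> {1..T}"
  shows "measure M {x \<in> space M. (\<Sum>s=1..t. Z2 s x) > 3/4 * (\<Sum>s=1..t. R2 s x) + (eta * cc) * ln (1 / (delta / T)) / (2 * (3/4))}
         \<le> delta / T"
proof (rule concentration2[where B="eta / gamma * Bd * sB"])
  show "prob_space M" by (rule P)
  show "subalgebra M (Fl s)" for s by (rule Fl_sub)
  show "subalgebra (Fl (Suc s)) (Fl s)" for s by (rule Fl_mono)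
  show "Z2 s \<in> borel_measurable (Fl (Suc s))" if "s \<in> {1..t}" for s using meas_Z(1)[of s] that by auto
  show "Y2 s \<in> borel_measurable (Fl s)" if "s \<in> {1..t}" for s using meas_Fl(4)[of s] that by auto
  show "0 \<le> Y2 s x \<and> Y2 s x \<le> eta / gamma * Bd * sB" if s: "s \<in> {1..t}" for s x
  proof -
    have sT: "s \<in> {1..T}" using s t by auto
    have e: "0 \<le> eta / bt s x" "eta / bt s x \<le> eta / gamma" using etabt_le[of s x] s by auto
    have c: "0 \<le> chi s x" "chi s x \<le> 1" using chi01[of s x] by auto
    have "Y2 s x \<le> 1 * (eta / gamma) * Bd * sB" unfolding Y2_def
      using c e G_bound[OF sT, of x] ss_le_sB[OF sT, of x] ss0[of s x] Bd0 eta gamma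
      by (intro mult_mono) auto
    moreover have "0 \<le> Y2 s x" unfolding Y2_def using c e ss0[of s x] by (intro mult_nonneg_nonneg) auto
    ultimately show ?thesis by simp
  qed
  show "AE x in M. \<bar>Z2 s x\<bar> \<le> Y2 s x" if s: "s \<in> {1..t}" for s
  proof -
    have sT: "s \<in> {1..T}" using s t by auto
    have "AE x in M. \<bar>(chi s x * (eta / bt s x)) * (G (w s x) \<bullet> (g s x - G (w s x)))\<bar>
        \<le> (chi s x * (eta / bt s x)) * norm (G (w s x)) * ss s x"
    proof (rule ZY_gen[OF sT])
      fix x
      have "0 \<le> chi s x" using chi01[of s x] by auto
      moreover have "0 \<le> eta / bt s x" using etabt_le[of s x] s by auto
      ultimately show "0 \<le> chi s x * (eta / bt s x)" by (rule mult_nonneg_nonneg)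
    qed
    thus ?thesis unfolding Z2_def Y2_def by (simp add: abs_mult)
  qed
  show "(\<integral>x. h x * Z2 s x \<partial>M) = 0" if s: "s \<in> {1..t}" and hm: "h \<in> borel_measurable (Fl s)"
    and hb: "AE x in M. \<bar>h x\<bar> \<le> C" for s h C
  proof -
    have sT: "s \<in> {1..T}" using s t by auto
    have "(\<integral>x. h x * ((- (chi s x * (eta / bt s x))) * (G (w s x) \<bullet> (g s x - G (w s x)))) \<partial>M) = 0"
    proof (rule orth_c[OF sT _ _ hm hb])
      have [measurable]: "chi s \<in> borel_measurable (Fl s)" "bt s \<in> borel_measurable (Fl s)"
        using meas_Fl(1,2)[of s] sT by auto
      show "(\<lambda>x. - (chi s x * (eta / bt s x))) \<in> borel_measurable (Fl s)" by measurable
      show "\<bar>- (chi s x * (eta / bt s x))\<bar> \<le> 1 * (eta / gamma)" for x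
        using chi01[of s x] etabt_le[of s x] sT by (auto simp: abs_mult)
    qed
    thus ?thesis unfolding Z2_def .
  qed
  show "(Y2 s x)\<^sup>2 \<le> eta * cc * R2 s x" if s: "s \<in> {1..t}" for s x
  proof (cases "chi s x = 1")
    case True
    have sp: "s \<ge> 1" using s by simp
    have bp: "bt s x > 0" using bt_pos[OF sp] .
    have "(Y2 s x)\<^sup>2 = R2 s x * (eta / bt s x * ss s x * ss s x)"
      unfolding Y2_def R2_def True by (simp add: power2_eq_square)
    also have "\<dots> \<le> R2 s x * (eta * 1 * cc)"
    proof (intro mult_left_mono)
      have "ss s x / bt s x \<le> 1" using ss_le_bt[of s x] bp by simp
      hence "eta / bt s x * ss s x = eta * (ss s x / bt s x)" by simp
      have "eta / bt s x * ss s x * ss s x = eta * (ss s x / bt s x) * ss s x" by simp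
      also have "\<dots> \<le> eta * 1 * cc"
        using \<open>ss s x / bt s x \<le> 1\<close> ss_chi_cc[OF True] eta ss0[of s x] bp
        by (intro mult_mono) auto
      finally show "eta / bt s x * ss s x * ss s x \<le> eta * 1 * cc" .
      show "0 \<le> R2 s x" unfolding R2_def True using bp eta by simp
    qed
    finally show ?thesis by (simp add: algebra_simps)
  next
    case False
    hence "chi s x = 0" using chi01 by blast
    thus ?thesis unfolding Y2_def R2_def by simp
  qed
  show "0 \<le> R2 s x" if s: "s \<in> {1..t}" for s x
  proof -
    have "0 \<le> chi s x" using chi01[of s x] by auto
    moreover have "0 \<le> eta / bt s x" using etabt_le[of s x] s by auto
    ultimately show ?thesis unfolding R2_def by (intro mult_nonneg_nonneg) auto
  qed
  show "0 \<le> eta * cc" using eta cc0 by simp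
  show "0 < (3/4::real)" by simp
  show "0 < delta / T" using delta t by simp
qed

lemma conc_Z3:
  shows "measure M {x \<in> space M. (\<Sum>s=1..T. Z3 s x) > 1/4 * (\<Sum>s=1..T. (norm (G (w s x)))\<^sup>2) + K3 * ln (1 / delta) / (2 * (1/4))}
         \<le> delta"
proof (rule concentration2[where B="Bd * sB"])
  show "prob_space M" by (rule P)
  show "subalgebra M (Fl s)" for s by (rule Fl_sub)
  show "subalgebra (Fl (Suc s)) (Fl s)" for s by (rule Fl_mono)
  show "Z3 s \<in> borel_measurable (Fl (Suc s))" if "s \<in> {1..T}" for s using meas_Z(2)[of s] that by auto
  show "Y3 s \<in> borel_measurable (Fl s)" if "s \<in> {1..T}" for s using meas_Fl(6)[of s] that by auto
  show "0 \<le> Y3 s x \<and> Y3 s x \<le> Bd * sB" if sT: "s \<in> {1..T}" for s x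
  proof -
    have c: "0 \<le> chi s x" "chi s x \<le> 1" using chi01[of s x] by auto
    have "Y3 s x \<le> 1 * Bd * sB" unfolding Y3_def
      using c G_bound[OF sT, of x] ss_le_sB[OF sT, of x] ss0[of s x] Bd0
      by (intro mult_mono) auto
    moreover have "0 \<le> Y3 s x" unfolding Y3_def using c ss0[of s x] by simp
    ultimately show ?thesis by simp
  qed
  show "AE x in M. \<bar>Z3 s x\<bar> \<le> Y3 s x" if sT: "s \<in> {1..T}" for s
  proof -
    have "AE x in M. \<bar>chi s x * (G (w s x) \<bullet> (g s x - G (w s x)))\<bar> \<le> chi s x * norm (G (w s x)) * ss s x"
      by (rule ZY_gen[OF sT]) (metis chi01 order_refl zero_le_one)
    moreover have "\<bar>Z3 s x\<bar> = \<bar>chi s x * (G (w s x) \<bullet> (g s x - G (w s x)))\<bar>" for x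
      unfolding Z3_def by (simp add: abs_mult inner_diff_right abs_minus_commute)
    ultimately show ?thesis unfolding Y3_def by simp
  qed
  show "(\<integral>x. h x * Z3 s x \<partial>M) = 0" if sT: "s \<in> {1..T}" and hm: "h \<in> borel_measurable (Fl s)"
    and hb: "AE x in M. \<bar>h x\<bar> \<le> C" for s h C
  proof -
    have "(\<integral>x. h x * ((- chi s x) * (G (w s x) \<bullet> (g s x - G (w s x)))) \<partial>M) = 0"
    proof (rule orth_c[OF sT _ _ hm hb])
      have [measurable]: "chi s \<in> borel_measurable (Fl s)" using meas_Fl(1)[of s] sT by auto
      show "(\<lambda>x. - chi s x) \<in> borel_measurable (Fl s)" by measurable
      show "\<bar>- chi s x\<bar> \<le> 1" for x using chi01[of s x] by auto
    qed
    moreover have "Z3 s x = (- chi s x) * (G (w s x) \<bullet> (g s x - G (w s x)))" for x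
      unfolding Z3_def by (simp add: inner_diff_right algebra_simps)
    ultimately show ?thesis by simp
  qed
  show "(Y3 s x)\<^sup>2 \<le> K3 * (norm (G (w s x)))\<^sup>2" if s: "s \<in> {1..T}" for s x
  proof (cases "chi s x = 1")
    case True
    have "(Y3 s x)\<^sup>2 = (norm (G (w s x)))\<^sup>2 * (ss s x)\<^sup>2" unfolding Y3_def True by (simp add: power_mult_distrib)
    also have "\<dots> \<le> (norm (G (w s x)))\<^sup>2 * K3" using ss_chi_K3[OF True] by (intro mult_left_mono) auto
    finally show ?thesis by (simp add: algebra_simps)
  next
    case False
    hence "chi s x = 0" using chi01 by blast
    moreover have "K3 \<ge> 0" unfolding K3_def using beta0 Fc0 by simp
    ultimately show ?thesis unfolding Y3_def by simp
  qed
  show "0 \<le> (norm (G (w s x)))\<^sup>2" for s x by simp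
  show "0 \<le> K3" unfolding K3_def using beta0 Fc0 by simp
  show "0 < (1/4::real)" by simp
  show "0 < delta" using delta by simp
qed

end

context ada_d begin

lemma per_step:
  assumes s: "s \<ge> 1" and c: "chi s x = 1"
    and nx: "(norm (g s x - G (w s x)))\<^sup>2 \<le> sigma0\<^sup>2 + sigma1\<^sup>2 * (norm (G (w s x)))\<^sup>2"
  shows "- (eta / sqrt (Bs s x)) * (G (w s x) \<bullet> g s x)
     \<le> - R2 s x + Z2 s x + 1/4 * R2 s x + 9/4 * eta * ss s x * ((norm (g s x))\<^sup>2 / Bs s x)"
proof -
  have BsS: "Bs s x = Bs (s - 1) x + (norm (g s x))\<^sup>2" using Bs_Suc[of "s - 1" x] s by simp
  have Bp: "Bs (s - 1) x > 0" by (rule Bs_pos)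
  have corr: "(eta / bt s x - eta / sqrt (Bs s x)) * (G (w s x) \<bullet> g s x)
      \<le> 1/4 * (eta / bt s x) * (norm (G (w s x)))\<^sup>2 + 9/4 * eta * ss s x * (norm (g s x))\<^sup>2 / Bs s x"
    using correction[OF Bp less_imp_le[OF eta] nx] unfolding bt_def ss_def BsS by simp
  have split: "G (w s x) \<bullet> g s x = (norm (G (w s x)))\<^sup>2 + G (w s x) \<bullet> (g s x - G (w s x))"
    by (simp add: inner_diff_right power2_norm_eq_inner)
  define A1 where "A1 = (eta / bt s x - eta / sqrt (Bs s x)) * (G (w s x) \<bullet> g s x)"
  have "- (eta / sqrt (Bs s x)) * (G (w s x) \<bullet> g s x)
      = - (eta / bt s x) * (G (w s x) \<bullet> g s x) + A1"
    unfolding A1_def by (simp add: algebra_simps)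
  also have "- (eta / bt s x) * (G (w s x) \<bullet> g s x) = - R2 s x + Z2 s x"
    unfolding R2_def Z2_def c split by (simp add: algebra_simps)
  finally have eqn: "- (eta / sqrt (Bs s x)) * (G (w s x) \<bullet> g s x) = - R2 s x + Z2 s x + A1" .
  have r: "1/4 * (eta / bt s x) * (norm (G (w s x)))\<^sup>2 = 1/4 * R2 s x" unfolding R2_def c by simp
  have q: "9/4 * eta * ss s x * (norm (g s x))\<^sup>2 / Bs s x = 9/4 * eta * ss s x * ((norm (g s x))\<^sup>2 / Bs s x)" by simp
  have "A1 \<le> 1/4 * R2 s x + 9/4 * eta * ss s x * ((norm (g s x))\<^sup>2 / Bs s x)"
    using corr unfolding A1_def r q .
  hence "- R2 s x + Z2 s x + A1 \<le> - R2 s x + Z2 s x + (1/4 * R2 s x + 9/4 * eta * ss s x * ((norm (g s x))\<^sup>2 / Bs s x))"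
    by (rule add_left_mono)
  thus ?thesis unfolding eqn by (simp only: add.assoc)
qed

lemma step_bound:
  assumes t: "t \<ge> 1" "Suc t \<le> T"
    and nx: "\<forall>s\<in>{1..T}. (norm (g s x - G (w s x)))\<^sup>2 \<le> sigma0\<^sup>2 + sigma1\<^sup>2 * (norm (G (w s x)))\<^sup>2"
    and cx: "(\<Sum>s=1..t. Z2 s x) \<le> 3/4 * (\<Sum>s=1..t. R2 s x) + (eta * cc) * ln (1 / (delta / T)) / (2 * (3/4))"
    and ch: "\<forall>s\<in>{1..t}. chi s x = 1"
  shows "f (w (Suc t) x) - fstar \<le> Fc"
proof -
  define Q where "Q = (\<Sum>s=1..t. (norm (g s x))\<^sup>2 / Bs s x)"
  have tel: "f (w (Suc t) x) \<le> f w1 + (\<Sum>s=1..t. - (eta / sqrt (Bs s x)) * (G (w s x) \<bullet> g s x)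
    + beta / 2 * (eta / sqrt (Bs s x))\<^sup>2 * (norm (g s x))\<^sup>2)" by (rule telescope[OF t(1)])
  have ps: "- (eta / sqrt (Bs s x)) * (G (w s x) \<bullet> g s x) + beta / 2 * (eta / sqrt (Bs s x))\<^sup>2 * (norm (g s x))\<^sup>2
     \<le> - 3/4 * R2 s x + Z2 s x + (9/4 * eta * cc + beta / 2 * eta\<^sup>2) * ((norm (g s x))\<^sup>2 / Bs s x)"
    if s: "s \<in> {1..t}" for s
  proof -
    have s1: "s \<ge> 1" and sT: "s \<in> {1..T}" using s t by auto
    have c: "chi s x = 1" using ch s by auto
    have a: "- (eta / sqrt (Bs s x)) * (G (w s x) \<bullet> g s x)
     \<le> - R2 s x + Z2 s x + 1/4 * R2 s x + 9/4 * eta * ss s x * ((norm (g s x))\<^sup>2 / Bs s x)"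
      by (rule per_step[OF s1 c]) (use nx sT in auto)
    have q0: "0 \<le> (norm (g s x))\<^sup>2 / Bs s x" using Bs_pos[of s x] by simp
    have b: "9/4 * eta * ss s x * ((norm (g s x))\<^sup>2 / Bs s x) \<le> 9/4 * eta * cc * ((norm (g s x))\<^sup>2 / Bs s x)"
      using ss_chi_cc[OF c] eta q0 by (intro mult_right_mono mult_left_mono) auto
    have e: "beta / 2 * (eta / sqrt (Bs s x))\<^sup>2 * (norm (g s x))\<^sup>2 = beta / 2 * eta\<^sup>2 * ((norm (g s x))\<^sup>2 / Bs s x)"
      using Bs_pos[of s x] by (simp add: power_divide)
    have d: "(9/4 * eta * cc + beta / 2 * eta\<^sup>2) * ((norm (g s x))\<^sup>2 / Bs s x)
       = 9/4 * eta * cc * ((norm (g s x))\<^sup>2 / Bs s x) + beta / 2 * eta\<^sup>2 * ((norm (g s x))\<^sup>2 / Bs s x)"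
      by (simp add: algebra_simps)
    show ?thesis unfolding d using a b e by linarith
  qed
  have "(\<Sum>s=1..t. - (eta / sqrt (Bs s x)) * (G (w s x) \<bullet> g s x) + beta / 2 * (eta / sqrt (Bs s x))\<^sup>2 * (norm (g s x))\<^sup>2)
      \<le> (\<Sum>s=1..t. - 3/4 * R2 s x + Z2 s x + (9/4 * eta * cc + beta / 2 * eta\<^sup>2) * ((norm (g s x))\<^sup>2 / Bs s x))"
    using ps by (intro sum_mono) auto
  also have "\<dots> = - 3/4 * (\<Sum>s=1..t. R2 s x) + (\<Sum>s=1..t. Z2 s x) + (9/4 * eta * cc + beta / 2 * eta\<^sup>2) * Q"
    unfolding Q_def by (simp add: sum.distrib sum_distrib_left sum_negf sum_subtractf)
  finally have s1: "(\<Sum>s=1..t. - (eta / sqrt (Bs s x)) * (G (w s x) \<bullet> g s x) + beta / 2 * (eta / sqrt (Bs s x))\<^sup>2 * (norm (g s x))\<^sup>2)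
      \<le> - 3/4 * (\<Sum>s=1..t. R2 s x) + (\<Sum>s=1..t. Z2 s x) + (9/4 * eta * cc + beta / 2 * eta\<^sup>2) * Q" .
  have Qb: "Q \<le> ln 2 * C1"
  proof -
    have "Q = (\<Sum>s=1..t. (norm (g s x))\<^sup>2 / (gamma\<^sup>2 + (\<Sum>r=1..s. (norm (g r x))\<^sup>2)))"
      unfolding Q_def Bs_def ..
    also have "\<dots> \<le> ln ((gamma\<^sup>2 + (\<Sum>r=1..t. (norm (g r x))\<^sup>2)) / gamma\<^sup>2)"
      by (rule ln_sum_bound) (use gamma in auto)
    also have "\<dots> = ln (Bs t x / gamma\<^sup>2)" unfolding Bs_def ..
    also have "\<dots> \<le> ln (1 + (2 * sigma0\<^sup>2 * T + 8 * (1 + sigma1\<^sup>2) * (eta\<^sup>2 * beta\<^sup>2 * T ^ 3 + beta * D1 * T)) / gamma\<^sup>2)"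
    proof (rule ln_mono)
      show "0 < Bs t x / gamma\<^sup>2" using Bs_pos[of t x] gamma by simp
      have "Bs t x \<le> gamma\<^sup>2 + (2 * sigma0\<^sup>2 * T + 8 * (1 + sigma1\<^sup>2) * (eta\<^sup>2 * beta\<^sup>2 * T ^ 3 + beta * D1 * T))"
        unfolding D1_def by (rule Bs_bound[OF nx]) (use t in auto)
      thus "Bs t x / gamma\<^sup>2 \<le> 1 + (2 * sigma0\<^sup>2 * T + 8 * (1 + sigma1\<^sup>2) * (eta\<^sup>2 * beta\<^sup>2 * T ^ 3 + beta * D1 * T)) / gamma\<^sup>2"
        using gamma by (simp add: field_simps)
    qed
    also have "\<dots> = ln 2 * C1" unfolding C1_def log_def by simp
    finally show ?thesis .
  qed
  have lnT: "ln (1 / (delta / T)) = ln 2 * L" unfolding L_def log_def by simp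
  have coef0: "0 \<le> 9/4 * eta * cc + beta / 2 * eta\<^sup>2" using eta cc0 beta0 by simp
  have s2: "(9/4 * eta * cc + beta / 2 * eta\<^sup>2) * Q \<le> (9/4 * eta * cc + beta / 2 * eta\<^sup>2) * (ln 2 * C1)"
    using Qb coef0 by (rule mult_left_mono)
  have fin: "D1 + 2/3 * eta * cc * ln 2 * L + 9/4 * eta * cc * ln 2 * C1 + beta * eta\<^sup>2 / 2 * ln 2 * C1 \<le> Fc"
    by (rule final_alg[OF D10 L0 C10 less_imp_le[OF eta] beta0 sig0 sig1 _ ln2_le Fc_def cc_def]) simp
  have "f (w (Suc t) x) - fstar \<le> D1 + (eta * cc) * (ln 2 * L) / (2 * (3/4)) + (9/4 * eta * cc + beta / 2 * eta\<^sup>2) * (ln 2 * C1)"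
    using tel s1 s2 cx lnT unfolding D1_def by simp
  also have "\<dots> = D1 + 2/3 * eta * cc * ln 2 * L + 9/4 * eta * cc * ln 2 * C1 + beta * eta\<^sup>2 / 2 * ln 2 * C1"
    by (simp add: algebra_simps)
  finally show ?thesis using fin by linarith
qed

lemma det_core:
  assumes nx: "\<forall>s\<in>{1..T}. (norm (g s x - G (w s x)))\<^sup>2 \<le> sigma0\<^sup>2 + sigma1\<^sup>2 * (norm (G (w s x)))\<^sup>2"
    and cx: "\<forall>t\<in>{1..T}. (\<Sum>s=1..t. Z2 s x) \<le> 3/4 * (\<Sum>s=1..t. R2 s x) + (eta * cc) * ln (1 / (delta / T)) / (2 * (3/4))"
  shows "\<forall>t\<in>{1..T}. f (w t x) - fstar \<le> Fc"
proof -
  have "t \<le> T \<longrightarrow> (\<forall>s\<in>{1..t}. f (w s x) - fstar \<le> Fc)" for t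
  proof (induction t)
    case 0 thus ?case by simp
  next
    case (Suc t)
    show ?case
    proof
      assume tT: "Suc t \<le> T"
      have IH: "\<forall>s\<in>{1..t}. f (w s x) - fstar \<le> Fc" using Suc.IH tT by simp
      have new: "f (w (Suc t) x) - fstar \<le> Fc"
      proof (cases "t = 0")
        case True thus ?thesis using Fc_ge D10 unfolding D1_def by simp
      next
        case False
        hence t1: "t \<ge> 1" by simp
        show ?thesis
        proof (rule step_bound[OF t1 tT nx])
          show "(\<Sum>s=1..t. Z2 s x) \<le> 3/4 * (\<Sum>s=1..t. R2 s x) + (eta * cc) * ln (1 / (delta / T)) / (2 * (3/4))"
            using cx t1 tT by simp
          show "\<forall>s\<in>{1..t}. chi s x = 1" using IH unfolding chi_def by simp
        qed
      qed
      show "\<forall>s\<in>{1..Suc t}. f (w s x) - fstar \<le> Fc"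
        using IH new by (auto simp: le_Suc_eq)
    qed
  qed
  thus ?thesis by auto
qed

end

context ada_d begin

lemma Z2R2_M: "s \<ge> 1 \<Longrightarrow> Z2 s \<in> borel_measurable M \<and> R2 s \<in> borel_measurable M"
  using measurable_from_subalg[OF Fl_sub meas_Z(1)] measurable_from_subalg[OF Fl_sub meas_Fl(5)] by blast

lemma Z3_M: "s \<ge> 1 \<Longrightarrow> Z3 s \<in> borel_measurable M"
  using measurable_from_subalg[OF Fl_sub meas_Z(2)] by blast

lemma fw_M: "(\<lambda>x. f (w t x)) \<in> borel_measurable M"
proof (cases "t = 0")
  case True thus ?thesis by simp
next
  case False
  hence "w t \<in> borel_measurable M" using measurable_from_subalg[OF Fl_sub w_Fl[of t]] by simp
  thus ?thesis by measurable
qed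

lemma Gw_M: "(\<lambda>x. G (w t x)) \<in> borel_measurable M"
proof (cases "t = 0")
  case True thus ?thesis by simp
next
  case False
  hence "w t \<in> borel_measurable M" using measurable_from_subalg[OF Fl_sub w_Fl[of t]] by simp
  thus ?thesis by measurable
qed

definition "bad2 = {x \<in> space M. \<exists>t\<in>{1..T}. f (w t x) - fstar > Fc}"
definition "Eb t = {x \<in> space M. (\<Sum>s=1..t. Z2 s x) > 3/4 * (\<Sum>s=1..t. R2 s x) + (eta * cc) * ln (1 / (delta / T)) / (2 * (3/4))}"

lemma bad2_sets: "bad2 \<in> sets M"
proof -
  have [measurable]: "(\<lambda>x. f (w t x)) \<in> borel_measurable M" for t by (rule fw_M)
  show ?thesis unfolding bad2_def by measurable
qed

lemma Eb_sets: "Eb t \<in> sets M"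
proof -
  have [measurable]: "Z2 s \<in> borel_measurable M" "R2 s \<in> borel_measurable M" if "s \<in> {1..t}" for s
    using Z2R2_M[of s] that by auto
  show ?thesis unfolding Eb_def by measurable
qed

lemma lemma2: "measure M bad2 \<le> delta"
proof -
  interpret prob_space M by (rule P)
  show ?thesis
  proof (cases "T = 0")
    case True thus ?thesis unfolding bad2_def using delta by simp
  next
    case False
    have "AE x in M. \<forall>s\<in>{1..T}. (norm (g s x - G (w s x)))\<^sup>2 \<le> sigma0\<^sup>2 + sigma1\<^sup>2 * (norm (G (w s x)))\<^sup>2"
      by (intro AE_finite_allI) (auto intro!: noise)
    hence "AE x in M. x \<in> bad2 \<longrightarrow> x \<in> (\<Union>t\<in>{1..T}. Eb t)"
    proof (rule AE_mp[OF _ AE_I2], intro impI)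
      fix x assume x: "x \<in> space M"
        and nx: "\<forall>s\<in>{1..T}. (norm (g s x - G (w s x)))\<^sup>2 \<le> sigma0\<^sup>2 + sigma1\<^sup>2 * (norm (G (w s x)))\<^sup>2"
        and b: "x \<in> bad2"
      show "x \<in> (\<Union>t\<in>{1..T}. Eb t)"
      proof (rule ccontr)
        assume "x \<notin> (\<Union>t\<in>{1..T}. Eb t)"
        hence "\<forall>t\<in>{1..T}. (\<Sum>s=1..t. Z2 s x) \<le> 3/4 * (\<Sum>s=1..t. R2 s x) + (eta * cc) * ln (1 / (delta / T)) / (2 * (3/4))"
          using x unfolding Eb_def by (auto simp: not_less)
        hence "\<forall>t\<in>{1..T}. f (w t x) - fstar \<le> Fc" by (rule det_core[OF nx])
        thus False using b unfolding bad2_def by force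
      qed
    qed
    hence "measure M bad2 \<le> measure M (\<Union>t\<in>{1..T}. Eb t)"
      by (rule finite_measure_mono_AE) (use Eb_sets in auto)
    also have "\<dots> \<le> (\<Sum>t\<in>{1..T}. measure M (Eb t))"
      by (rule finite_measure_subadditive_finite) (use Eb_sets in auto)
    also have "\<dots> \<le> (\<Sum>t\<in>{1..T}. delta / T)"
      by (intro sum_mono) (unfold Eb_def, rule conc_Z2, simp)
    also have "\<dots> = delta" using False by simp
    finally show ?thesis .
  qed
qed

definition "bad3 = {x \<in> space M. (\<Sum>s=1..T. Z3 s x) > 1/4 * (\<Sum>s=1..T. (norm (G (w s x)))\<^sup>2) + K3 * ln (1 / delta) / (2 * (1/4))}"

lemma bad3_sets: "bad3 \<in> sets M"
proof -
  have [measurable]: "Z3 s \<in> borel_measurable M" if "s \<in> {1..T}" for s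
    using Z3_M[of s] that by auto
  have [measurable]: "(\<lambda>x. G (w s x)) \<in> borel_measurable M" for s by (rule Gw_M)
  show ?thesis unfolding bad3_def by measurable
qed

lemma main_ada:
  "measure M {x \<in> space M.
          (\<Sum>t=1..T. G (w t x) \<bullet> (G (w t x) - g t x))
          \<le> 1/4 * (\<Sum>t=1..T. (norm (G (w t x)))\<^sup>2)
            + 3 * (sigma0\<^sup>2 + 2 * beta * sigma1\<^sup>2 * Fc) * log 2 (1 / delta)} \<ge> 1 - 2 * delta"
proof -
  interpret prob_space M by (rule P)
  define S where "S = {x \<in> space M.
          (\<Sum>t=1..T. G (w t x) \<bullet> (G (w t x) - g t x))
          \<le> 1/4 * (\<Sum>t=1..T. (norm (G (w t x)))\<^sup>2)
            + 3 * (sigma0\<^sup>2 + 2 * beta * sigma1\<^sup>2 * Fc) * log 2 (1 / delta)}"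
  have Sm: "S \<in> sets M"
  proof -
    have [measurable]: "(\<lambda>x. G (w s x)) \<in> borel_measurable M" for s by (rule Gw_M)
    have m1: "(\<lambda>x. \<Sum>t=1..T. G (w t x) \<bullet> (G (w t x) - g t x)) \<in> borel_measurable M"
      using meas by (intro borel_measurable_sum borel_measurable_inner borel_measurable_diff) (auto intro: Gw_M)
    have m2: "(\<lambda>x. 1/4 * (\<Sum>t=1..T. (norm (G (w t x)))\<^sup>2)
            + 3 * (sigma0\<^sup>2 + 2 * beta * sigma1\<^sup>2 * Fc) * log 2 (1 / delta)) \<in> borel_measurable M"
      by (intro borel_measurable_add borel_measurable_times borel_measurable_sum borel_measurable_power borel_measurable_norm borel_measurable_const) (auto intro: Gw_M)
    show ?thesis unfolding S_def using m1 m2 by measurable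
  qed
  have sub: "space M - S \<subseteq> bad2 \<union> bad3"
  proof
    fix x assume xs: "x \<in> space M - S"
    hence x: "x \<in> space M" by simp
    show "x \<in> bad2 \<union> bad3"
    proof (rule ccontr)
      assume "x \<notin> bad2 \<union> bad3"
      hence n2: "\<forall>t\<in>{1..T}. f (w t x) - fstar \<le> Fc" and n3: "(\<Sum>s=1..T. Z3 s x) \<le> 1/4 * (\<Sum>s=1..T. (norm (G (w s x)))\<^sup>2) + K3 * ln (1 / delta) / (2 * (1/4))"
        using x unfolding bad2_def bad3_def by (auto simp: not_less)
      have "(\<Sum>t=1..T. G (w t x) \<bullet> (G (w t x) - g t x)) = (\<Sum>s=1..T. Z3 s x)"
      proof (rule sum.cong[OF refl])
        fix s assume "s \<in> {1..T}"
        hence "chi s x = 1" using n2 unfolding chi_def by simp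
        thus "G (w s x) \<bullet> (G (w s x) - g s x) = Z3 s x" unfolding Z3_def by simp
      qed
      also have "\<dots> \<le> 1/4 * (\<Sum>s=1..T. (norm (G (w s x)))\<^sup>2) + K3 * ln (1 / delta) / (2 * (1/4))" by (rule n3)
      also have "\<dots> \<le> 1/4 * (\<Sum>s=1..T. (norm (G (w s x)))\<^sup>2) + 3 * K3 * log 2 (1 / delta)"
      proof -
        have K0: "K3 \<ge> 0" unfolding K3_def using beta0 Fc0 by simp
        have l0: "ln (1 / delta) \<ge> 0" using delta by simp
        have "ln (1 / delta) \<le> log 2 (1 / delta)"
        proof -
          have "ln 2 \<le> (1::real)" using ln2_le by simp
          moreover have "ln (2::real) > 0" by simp
          ultimately have "ln (1 / delta) * ln 2 \<le> ln (1 / delta) * 1" using l0 by (intro mult_left_mono) auto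
          thus ?thesis unfolding log_def using \<open>ln 2 > 0\<close> by (simp add: field_simps)
        qed
        hence "K3 * ln (1 / delta) \<le> K3 * log 2 (1 / delta)" using K0 by (rule mult_left_mono)
        moreover have "0 \<le> K3 * ln (1 / delta)" using K0 l0 by simp
        ultimately have "K3 * ln (1 / delta) / (2 * (1/4)) \<le> 3 * K3 * log 2 (1 / delta)" by simp
        thus ?thesis by simp
      qed
      finally have "x \<in> S" unfolding S_def K3_def using x by simp
      thus False using xs by simp
    qed
  qed
  have "measure M (space M - S) \<le> measure M (bad2 \<union> bad3)"
    by (rule finite_measure_mono[OF sub]) (use bad2_sets bad3_sets in auto)
  also have "\<dots> \<le> measure M bad2 + measure M bad3"
    by (rule measure_Un_le) (use bad2_sets bad3_sets in auto)
  also have "\<dots> \<le> delta + delta"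
  proof (intro add_mono lemma2)
    show "measure M bad3 \<le> delta" unfolding bad3_def by (rule conc_Z3)
  qed
  finally have "measure M (space M - S) \<le> 2 * delta" by simp
  moreover have "measure M (space M - S) = 1 - measure M S" using prob_compl[OF Sm] .
  ultimately show ?thesis unfolding S_def[symmetric] by simp
qed

end

theorem lemma3:
  fixes M :: "'a measure"
    and f :: "'d::euclidean_space \<Rightarrow> real" and G :: "'d \<Rightarrow> 'd"
    and g :: "nat \<Rightarrow> 'a \<Rightarrow> 'd"
    and w1 :: 'd and beta fstar eta gamma sigma0 sigma1 delta :: real and T :: nat
  assumes "prob_space M"
    and grad: "\<And>x. (f has_derivative (\<lambda>h. G x \<bullet> h)) (at x)"
    and smooth: "\<And>x y. norm (G x - G y) \<le> beta * norm (x - y)"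
    and fmin: "\<And>x. fstar \<le> f x" and fmin_att: "\<exists>x. f x = fstar"
    and eta: "eta > 0" and gamma: "gamma > 0"
    and sig0: "sigma0 \<ge> 0" and sig1: "sigma1 \<ge> 0"
    and meas: "\<And>t. g t \<in> borel_measurable M"
    and unbiased: "\<And>t v. t \<in> {1..T} \<Longrightarrow>
       AE x in M. real_cond_exp M (nat_filt M g t) (\<lambda>x. g t x \<bullet> v) x
                  = G (ada_w w1 eta gamma g t x) \<bullet> v"
    and noise: "\<And>t. t \<in> {1..T} \<Longrightarrow>
       AE x in M. (norm (g t x - G (ada_w w1 eta gamma g t x)))\<^sup>2
                  \<le> sigma0\<^sup>2 + sigma1\<^sup>2 * (norm (G (ada_w w1 eta gamma g t x)))\<^sup>2"
    and delta: "0 < delta" "delta < 1"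
  shows
    "let D1 = f w1 - fstar;
         C1 = log 2 (1 + (2 * sigma0\<^sup>2 * T + 8 * (1 + sigma1\<^sup>2) * (eta\<^sup>2 * beta\<^sup>2 * T ^ 3 + beta * D1 * T)) / gamma\<^sup>2);
         F = 2 * D1 + (3 * log 2 (T / delta) + 4 * C1) * eta * sigma0
             + (9 * (log 2 (T / delta))\<^sup>2 + 16 * C1\<^sup>2) * eta\<^sup>2 * beta * sigma1\<^sup>2
             + eta\<^sup>2 * beta * C1
     in measure M {x \<in> space M.
          (\<Sum>t=1..T. G (ada_w w1 eta gamma g t x) \<bullet> (G (ada_w w1 eta gamma g t x) - g t x))
          \<le> 1/4 * (\<Sum>t=1..T. (norm (G (ada_w w1 eta gamma g t x)))\<^sup>2)
            + 3 * (sigma0\<^sup>2 + 2 * beta * sigma1\<^sup>2 * F) * log 2 (1 / delta)}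
        \<ge> 1 - 2 * delta"
proof -
  interpret ada_d M f G g w1 beta fstar eta gamma sigma0 sigma1 T delta
  proof (rule ada_d.intro)
    show "ada M f G g w1 beta fstar eta gamma sigma0 sigma1 T"
      by (rule ada.intro) (fact assms(1) grad smooth fmin eta gamma sig0 sig1 meas unbiased noise)+
    show "ada_d_axioms delta" by (rule ada_d_axioms.intro) (fact delta)+
  qed
  show ?thesis unfolding Let_def
    using main_ada unfolding Fc_def C1_def L_def D1_def .
qed

end
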